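(* Let $f:\mathbb{R}^{3}\to\mathbb{R}$ be quasi normal or quasi split normal. Then for all $x,y,z\in\mathbb{R}$ and $k_{1},k_{2},k_{3}\neq0$: (a) the limits $A(k_{1},y,z)=\lim_{r\to\infty}\int_{-r}^{r}f(x,y,z)e^{-ik_{1}x}dx$, $B(x,k_{2},z)=\lim_{r\to\infty}\int_{-r}^{r}f(x,y,z)e^{-ik_{2}y}dy$, $C(x,y,k_{3})=\lim_{r\to\infty}\int_{-r}^{r}f(x,y,z)e^{-ik_{3}z}dz$ all exist, and $(y,z)\mapsto A(k_{1},y,z)$, $(x,z)\mapsto B(x,k_{2},z)$, $(x,y)\mapsto C(x,y,k_{3})$ are of moderate decrease $3$; (b) the limits $F(k_{1},k_{2},z)=\lim_{r,s\to\infty}\int_{-r}^{r}\int_{-s}^{s}f(x,y,z)e^{-ik_{1}x}e^{-ik_{2}y}dxdy$, $G(k_{1},y,k_{3})=\lim_{r,s\to\infty}\int_{-r}^{r}\int_{-s}^{s}f(x,y,z)e^{-ik_{1}x}e^{-ik_{3}z}dxdz$, $H(x,k_{2},k_{3})=\lim_{r,s\to\infty}\int_{-r}^{r}\int_{-s}^{s}f(x,y,z)e^{-ik_{2}y}e^{-ik_{3}z}dydz$ all exist and are of moderate decrease in their remaining variable; (c) $F(k_{1},k_{2},z)=\int_{-\infty}^{\infty}A(k_{1},y,z)e^{-ik_{2}y}dy=\int_{-\infty}^{\infty}B(x,k_{2},z)e^{-ik_{1}x}dx$, $G(k_{1},y,k_{3})=\int_{-\infty}^{\infty}A(k_{1},y,z)e^{-ik_{3}z}dz=\int_{-\infty}^{\infty}C(x,y,k_{3})e^{-ik_{1}x}dx$,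 $H(x,k_{2},k_{3})=\int_{-\infty}^{\infty}B(x,k_{2},z)e^{-ik_{3}z}dz=\int_{-\infty}^{\infty}C(x,y,k_{3})e^{-ik_{2}y}dy$.
   Context: One-variable: a smooth $g:\mathbb{R}\setminus V\to\mathbb{R}$, $V$ bounded closed, is analytic at infinity if there exist $\epsilon_{1},\epsilon_{2}>0$ with $g(1/t)=\sum_{n\geq1}a_{n}t^{n}$ on $(0,\epsilon_{1})$ and $g(1/t)=\sum_{n\geq1}b_{n}t^{n}$ on $(-\epsilon_{2},0)$, real coefficients, both series absolutely convergent there. A one-variable function is of moderate decrease if $|g(t)|\leq C/t^{2}$ for $|t|>1$. Two variables: for smooth $h:\mathbb{R}^{2}\setminus W\to\mathbb{R}$, $W$ closed bounded: very moderate decrease means $|h(u,v)|\leq C/|(u,v)|$ for $|(u,v)|>1$; moderate decrease $n$ means $|h|\leq C/|(u,v)|^{n}$ for $|(u,v)|>1$ (moderate decrease means $n=2$). With fibres $h_{u}(v)=h(u,v)$, $h_{v}(u)=h(u,v)$: conditions (i) every $h_{u}$ analytic at infinity; (ii) every $h_{v}$ analytic at infinity; (iii) $h$ of very moderate decrease; (iv) $\partial h/\partial u$, $\partial h/\partial v$ of moderate decrease. $h$ is quasi normal if (i)–(iv) and (v)': for sufficiently large $u$ the zeros of $h_{u}$ lie in $(-M_{u},-N_{u})\cup(N_{u},M_{u})$ with $M_{u}-N_{u}$ uniformly bounded, likewise for $(h_{u})',(h_{u})''$ and for $h_{v},(h_{v})',(h_{v})''$. $h$ is quasi split normal if (i)–(iv)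 and (v)'': for sufficiently large $(u,v)$, $h=h_{1}+h_{2}$ with $h_{1},h_{2}$ quasi normal and $h,h_{1},h_{2}$ smooth. Three variables: smooth $f:\mathbb{R}^{3}\to\mathbb{R}$ is of very moderate decrease if $|f(x,y,z)|\leq C/|(x,y,z)|$ for $|(x,y,z)|>1$, of moderate decrease $n$ ($n\geq2$) if $|f|\leq C/|(x,y,z)|^{n}$ there. Fibres: $f_{x}(y,z)=f(x,y,z)$ etc., and $f_{x,y}(z)=f(x,y,z)$, $f_{x,z}(y)$, $f_{y,z}(x)$ similarly. Conditions: (iv) $f$ is of very moderate decrease; (v) for $i+j+k\geq1$, $\frac{\partial^{i+j+k}f}{\partial x^{i}\partial y^{j}\partial z^{k}}$ is of moderate decrease $i+j+k+1$. $f$ is quasi normal if all two-variable fibres $f_{x}(y,z)$, $f_{y}(x,z)$, $f_{z}(x,y)$ are quasi normal, (iv),(v) hold, and (vi)': for sufficiently large $(x,y)$, the zeros of $f_{x,y}$ and of its first four derivatives are contained in a finite union of $S$ intervals of total length $R$, with $S,R$ uniform in $(x,y)$, and similarly for $f_{x,z},f_{y,z}$. $f$ is quasi split normal if all two-variable fibres are quasi split normal, (iv),(v) hold, and (vi)'': for sufficiently large $(x,y)$, $f=f_{1}+f_{2}$ with $f,f_{1},f_{2}$ smooth and $f_{1},f_{2}$ having property (vi)'. *)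

theory Defs
  imports "HOL-Analysis.Analysis"
begin

definition pdu :: "(real \<Rightarrow> real \<Rightarrow> real) \<Rightarrow> real \<Rightarrow> real \<Rightarrow> real" where
  "pdu h = (\<lambda>u v. deriv (\<lambda>t. h t v) u)"
definition pdv :: "(real \<Rightarrow> real \<Rightarrow> real) \<Rightarrow> real \<Rightarrow> real \<Rightarrow> real" where
  "pdv h = (\<lambda>u v. deriv (\<lambda>t. h u t) v)"

datatype coord2 = CU | CV

fun pd2 :: "coord2 list \<Rightarrow> (real \<Rightarrow> real \<Rightarrow> real) \<Rightarrow> real \<Rightarrow> real \<Rightarrow> real" where
  "pd2 [] h = h"
| "pd2 (CU # ds) h = pdu (pd2 ds h)"
| "pd2 (CV # ds) h = pdv (pd2 ds h)"

definition smooth2_on :: "(real \<times> real) set \<Rightarrow> (real \<Rightarrow> real \<Rightarrow> real) \<Rightarrow> bool" where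
  "smooth2_on U h \<longleftrightarrow> open U \<and>
     (\<forall>ds. continuous_on U (\<lambda>(u,v). pd2 ds h u v) \<and>
       (\<forall>u v. (u,v) \<in> U \<longrightarrow>
          (\<lambda>t. pd2 ds h t v) differentiable (at u) \<and>
          (\<lambda>t. pd2 ds h u t) differentiable (at v)))"

definition pdx :: "(real \<Rightarrow> real \<Rightarrow> real \<Rightarrow> real) \<Rightarrow> real \<Rightarrow> real \<Rightarrow> real \<Rightarrow> real" where
  "pdx f = (\<lambda>x y z. deriv (\<lambda>t. f t y z) x)"
definition pdy :: "(real \<Rightarrow> real \<Rightarrow> real \<Rightarrow> real) \<Rightarrow> real \<Rightarrow> real \<Rightarrow> real \<Rightarrow> real" where
  "pdy f = (\<lambda>x y z. deriv (\<lambda>t. f x t z) y)"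
definition pdz :: "(real \<Rightarrow> real \<Rightarrow> real \<Rightarrow> real) \<Rightarrow> real \<Rightarrow> real \<Rightarrow> real \<Rightarrow> real" where
  "pdz f = (\<lambda>x y z. deriv (\<lambda>t. f x y t) z)"

datatype coord3 = CX | CY | CZ

fun pd3 :: "coord3 list \<Rightarrow> (real \<Rightarrow> real \<Rightarrow> real \<Rightarrow> real) \<Rightarrow> real \<Rightarrow> real \<Rightarrow> real \<Rightarrow> real" where
  "pd3 [] f = f"
| "pd3 (CX # ds) f = pdx (pd3 ds f)"
| "pd3 (CY # ds) f = pdy (pd3 ds f)"
| "pd3 (CZ # ds) f = pdz (pd3 ds f)"

definition smooth3 :: "(real \<Rightarrow> real \<Rightarrow> real \<Rightarrow> real) \<Rightarrow> bool" where
  "smooth3 f \<longleftrightarrow>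
     (\<forall>ds. continuous_on UNIV (\<lambda>(x,y,z). pd3 ds f x y z) \<and>
       (\<forall>x y z. (\<lambda>t. pd3 ds f t y z) differentiable (at x) \<and>
                (\<lambda>t. pd3 ds f x t z) differentiable (at y) \<and>
                (\<lambda>t. pd3 ds f x y t) differentiable (at z)))"

definition pd3ijk :: "nat \<Rightarrow> nat \<Rightarrow> nat \<Rightarrow> (real \<Rightarrow> real \<Rightarrow> real \<Rightarrow> real) \<Rightarrow> real \<Rightarrow> real \<Rightarrow> real \<Rightarrow> real" where
  "pd3ijk i j k f = pd3 (replicate i CX @ replicate j CY @ replicate k CZ) f"

definition mod_dec1 :: "(real \<Rightarrow> 'a::real_normed_vector) \<Rightarrow> bool" where
  "mod_dec1 g \<longleftrightarrow> (\<exists>C. \<forall>t. \<bar>t\<bar> > 1 \<longrightarrow> norm (g t) \<le> C / t^2)"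

text \<open>Two variables, function defined on R^2 minus W: decrease of order n
  (n = 1: very moderate decrease, n = 2: moderate decrease).\<close>
definition mod_dec2 :: "(real \<times> real) set \<Rightarrow> nat \<Rightarrow> (real \<Rightarrow> real \<Rightarrow> 'a::real_normed_vector) \<Rightarrow> bool" where
  "mod_dec2 W n h \<longleftrightarrow> (\<exists>C. \<forall>u v. (u,v) \<notin> W \<and> norm (u,v) > 1 \<longrightarrow> norm (h u v) \<le> C / norm (u,v)^n)"

text \<open>Three variables: decrease of order n (n = 1: very moderate decrease).\<close>
definition mod_dec3 :: "nat \<Rightarrow> (real \<Rightarrow> real \<Rightarrow> real \<Rightarrow> real) \<Rightarrow> bool" where
  "mod_dec3 n f \<longleftrightarrow> (\<exists>C. \<forall>x y z. norm (x,y,z) > 1 \<longrightarrow> \<bar>f x y z\<bar> \<le> C / norm (x,y,z)^n)"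

text \<open>g defined on R minus V (V bounded closed); series indexed from n = 1.\<close>
definition analytic_at_inf :: "real set \<Rightarrow> (real \<Rightarrow> real) \<Rightarrow> bool" where
  "analytic_at_inf V g \<longleftrightarrow> (\<exists>e1 e2 (a::nat \<Rightarrow> real) (b::nat \<Rightarrow> real). e1 > 0 \<and> e2 > 0 \<and>
     (\<forall>t. 0 < t \<and> t < e1 \<longrightarrow> 1/t \<notin> V \<and> summable (\<lambda>n. \<bar>a n * t ^ Suc n\<bar>) \<and>
          g (1/t) = (\<Sum>n. a n * t ^ Suc n)) \<and>
     (\<forall>t. -e2 < t \<and> t < 0 \<longrightarrow> 1/t \<notin> V \<and> summable (\<lambda>n. \<bar>b n * t ^ Suc n\<bar>) \<and>
          g (1/t) = (\<Sum>n. b n * t ^ Suc n)))"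

definition cond_v' :: "(real \<times> real) set \<Rightarrow> (real \<Rightarrow> real \<Rightarrow> real) \<Rightarrow> bool" where
  "cond_v' W h \<longleftrightarrow> (\<exists>U0 D.
     (\<forall>u. \<bar>u\<bar> > U0 \<longrightarrow> (\<forall>j\<le>2. \<exists>M N. M - N \<le> D \<and>
        {v. (u,v) \<notin> W \<and> (deriv ^^ j) (\<lambda>v. h u v) v = 0} \<subseteq> {-M<..<-N} \<union> {N<..<M})) \<and>
     (\<forall>v. \<bar>v\<bar> > U0 \<longrightarrow> (\<forall>j\<le>2. \<exists>M N. M - N \<le> D \<and>
        {u. (u,v) \<notin> W \<and> (deriv ^^ j) (\<lambda>u. h u v) u = 0} \<subseteq> {-M<..<-N} \<union> {N<..<M})))"

definition base2 :: "(real \<times> real) set \<Rightarrow> (real \<Rightarrow> real \<Rightarrow> real) \<Rightarrow> bool" where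
  "base2 W h \<longleftrightarrow> closed W \<and> bounded W \<and> smooth2_on (- W) h \<and>
     (\<forall>u. analytic_at_inf {v. (u,v) \<in> W} (\<lambda>v. h u v)) \<and>
     (\<forall>v. analytic_at_inf {u. (u,v) \<in> W} (\<lambda>u. h u v)) \<and>
     mod_dec2 W 1 h \<and> mod_dec2 W 2 (pdu h) \<and> mod_dec2 W 2 (pdv h)"

definition quasi_normal2 :: "(real \<times> real) set \<Rightarrow> (real \<Rightarrow> real \<Rightarrow> real) \<Rightarrow> bool" where
  "quasi_normal2 W h \<longleftrightarrow> base2 W h \<and> cond_v' W h"

definition quasi_split_normal2 :: "(real \<times> real) set \<Rightarrow> (real \<Rightarrow> real \<Rightarrow> real) \<Rightarrow> bool" where
  "quasi_split_normal2 W h \<longleftrightarrow> base2 W h \<and>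
     (\<exists>R W1 W2 h1 h2. quasi_normal2 W1 h1 \<and> quasi_normal2 W2 h2 \<and>
        (\<forall>u v. norm (u,v) > R \<longrightarrow> h u v = h1 u v + h2 u v))"

definition covered_by_intervals :: "nat \<Rightarrow> real \<Rightarrow> real set \<Rightarrow> bool" where
  "covered_by_intervals S L Z \<longleftrightarrow> (\<exists>a b :: nat \<Rightarrow> real.
     (\<forall>i<S. a i \<le> b i) \<and> (\<Sum>i<S. b i - a i) \<le> L \<and> Z \<subseteq> (\<Union>i<S. {a i..b i}))"

definition cond_vi' :: "(real \<Rightarrow> real \<Rightarrow> real \<Rightarrow> real) \<Rightarrow> bool" where
  "cond_vi' f \<longleftrightarrow> (\<exists>S L R0.
     (\<forall>x y. norm (x,y) > R0 \<longrightarrow>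
        covered_by_intervals S L {z. \<exists>j\<le>4. (deriv ^^ j) (\<lambda>z. f x y z) z = 0}) \<and>
     (\<forall>x z. norm (x,z) > R0 \<longrightarrow>
        covered_by_intervals S L {y. \<exists>j\<le>4. (deriv ^^ j) (\<lambda>y. f x y z) y = 0}) \<and>
     (\<forall>y z. norm (y,z) > R0 \<longrightarrow>
        covered_by_intervals S L {x. \<exists>j\<le>4. (deriv ^^ j) (\<lambda>x. f x y z) x = 0}))"

definition decay3 :: "(real \<Rightarrow> real \<Rightarrow> real \<Rightarrow> real) \<Rightarrow> bool" where
  "decay3 f \<longleftrightarrow> mod_dec3 1 f \<and>
     (\<forall>i j k. i + j + k \<ge> 1 \<longrightarrow> mod_dec3 (i + j + k + 1) (pd3ijk i j k f))"

definition quasi_normal3 :: "(real \<Rightarrow> real \<Rightarrow> real \<Rightarrow> real) \<Rightarrow> bool" where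
  "quasi_normal3 f \<longleftrightarrow> smooth3 f \<and>
     (\<forall>x. quasi_normal2 {} (\<lambda>y z. f x y z)) \<and>
     (\<forall>y. quasi_normal2 {} (\<lambda>x z. f x y z)) \<and>
     (\<forall>z. quasi_normal2 {} (\<lambda>x y. f x y z)) \<and>
     decay3 f \<and> cond_vi' f"

definition quasi_split_normal3 :: "(real \<Rightarrow> real \<Rightarrow> real \<Rightarrow> real) \<Rightarrow> bool" where
  "quasi_split_normal3 f \<longleftrightarrow> smooth3 f \<and>
     (\<forall>x. quasi_split_normal2 {} (\<lambda>y z. f x y z)) \<and>
     (\<forall>y. quasi_split_normal2 {} (\<lambda>x z. f x y z)) \<and>
     (\<forall>z. quasi_split_normal2 {} (\<lambda>x y. f x y z)) \<and>
     decay3 f \<and>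
     (\<exists>R f1 f2. smooth3 f1 \<and> smooth3 f2 \<and> cond_vi' f1 \<and> cond_vi' f2 \<and>
        (\<forall>x y z. norm (x,y,z) > R \<longrightarrow> f x y z = f1 x y z + f2 x y z))"

definition ef :: "real \<Rightarrow> real \<Rightarrow> complex" where
  "ef k t = exp (- (\<i> * complex_of_real (k * t)))"

end

theory Submission
  imports Defs
begin


lemma norm_ef[simp]: "norm (ef k t) = 1"
  unfolding ef_def by (simp add: norm_exp_eq_Re)

lemma ef_deriv: "((ef k) has_vector_derivative (- (\<i> * of_real k) * ef k t)) (at t within S)"
proof -
  have "((\<lambda>z. exp (- (\<i> * (of_real k * z)))) has_field_derivative
     (exp (- (\<i> * (of_real k * of_real t))) * (- (\<i> * of_real k)))) (at (of_real t))"
    by (auto intro!: derivative_eq_intros)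
  from has_vector_derivative_real_field[OF this]
  have "((\<lambda>t::real. exp (- (\<i> * complex_of_real (k * t)))) has_vector_derivative
     (exp (- (\<i> * complex_of_real (k * t))) * (- (\<i> * of_real k)))) (at t)"
    by simp
  then show ?thesis unfolding ef_def
    by (auto intro: has_vector_derivative_at_within simp: mult.commute)
qed

lemma ef_cont[continuous_intros]: "continuous_on S (ef k)"
  unfolding ef_def by (intro continuous_intros)

lemma arct_int:
  fixes a :: real assumes a: "a > 0"
  shows "((\<lambda>x. 1 / (a^2 + x^2)) has_integral pi / a) UNIV"
proof -
  let ?F = "\<lambda>x. arctan (x / a) / a"
  have d: "(?F has_real_derivative 1 / (a^2 + x^2)) (at x)" for x
  proof -
    have "a^2 + x^2 > 0" using a by (simp add: add_pos_nonneg)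
    then have "a * (a * a + x * x) > 0" using a by (simp add: power2_eq_square)
    then have q: "a * (a * a) + a * (x * x) > 0" by (simp add: distrib_left)
    have "((\<lambda>x. arctan (x/a)) has_real_derivative inverse (1+(x/a)^2) * (1/a)) (at x)"
      by (rule DERIV_chain2[OF DERIV_arctan]) (use a in \<open>auto intro!: derivative_eq_intros\<close>)
    then have "(?F has_real_derivative inverse (1+(x/a)^2) * (1/a) / a) (at x)"
      by (rule DERIV_cdivide)
    moreover have "inverse (1+(x/a)^2) * (1/a) / a = 1 / (a^2 + x^2)"
      using a q by (simp add: field_simps power2_eq_square)
    ultimately show ?thesis by simp
  qed
  have ft: "filterlim (\<lambda>x. x / a) at_top at_top"
    using filterlim_tendsto_pos_mult_at_top[OF tendsto_const[of "1/a"] _ filterlim_ident] a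
    by (simp add: divide_inverse_commute)
  have fb: "filterlim (\<lambda>x. x / a) at_bot at_bot"
    using filterlim_tendsto_pos_mult_at_bot[OF tendsto_const[of "1/a"] _ filterlim_ident] a
    by (simp add: divide_inverse_commute)
  have lt: "(?F \<longlongrightarrow> (pi/2) / a) at_top"
    by (intro tendsto_intros filterlim_compose[OF tendsto_arctan_at_top]
        ft) (use a in auto)
  have lb: "(?F \<longlongrightarrow> (-(pi/2)) / a) at_bot"
    by (intro tendsto_intros filterlim_compose[OF tendsto_arctan_at_bot]
        fb) (use a in auto)
  have I: "set_integrable lborel (einterval (-\<infinity>) \<infinity>) (\<lambda>x. 1 / (a^2 + x^2))"
     "(LBINT x=-\<infinity>..\<infinity>. 1 / (a^2 + x^2)) = (pi/2)/a - (-(pi/2))/a"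
  proof -
    have c: "isCont (\<lambda>x. 1 / (a^2 + x^2)) x" for x
    proof -
      have "a^2 + x^2 > 0" using a by (simp add: add_pos_nonneg)
      then show ?thesis using a by (intro continuous_intros) simp
    qed
    note X = interval_integral_FTC_nonneg[where F = ?F and f = "\<lambda>x. 1 / (a^2 + x^2)"
      and a = "-\<infinity>" and b = "\<infinity>" and A = "(-(pi/2)) / a" and B = "(pi/2)/a"]
    show "set_integrable lborel (einterval (-\<infinity>) \<infinity>) (\<lambda>x. 1 / (a^2 + x^2))"
      by (rule X(1)) (use d lt lb c in \<open>auto simp: ereal_tendsto_simps1\<close>)
    show "(LBINT x=-\<infinity>..\<infinity>. 1 / (a^2 + x^2)) = (pi/2)/a - (-(pi/2))/a"
      by (rule X(2)) (use d lt lb c in \<open>auto simp: ereal_tendsto_simps1\<close>)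
  qed
  have "(\<lambda>x. 1 / (a^2 + x^2)) integrable_on UNIV"
    using set_borel_integral_eq_integral(1)[OF I(1)] by simp
  moreover have "integral UNIV (\<lambda>x. 1 / (a^2 + x^2)) = pi / a"
    using set_borel_integral_eq_integral(2)[OF I(1)] I(2)
    by (simp add: interval_lebesgue_integral_def field_simps)
  ultimately show ?thesis by (metis integrable_integral)
qed

lemma inv_sq_int:
  fixes s t :: real assumes "0 < s" "s \<le> t"
  shows "((\<lambda>x. 1 / x^2) has_integral (1/s - 1/t)) {s..t}"
    and "((\<lambda>x. 1 / x^2) has_integral (1/s - 1/t)) {-t..-s}"
proof -
  have d: "((\<lambda>x. - 1 / x) has_vector_derivative 1 / x^2) (at x within S)" if "x \<noteq> 0" for x S
    using that unfolding has_real_derivative_iff_has_vector_derivative[symmetric]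
    by (auto intro!: derivative_eq_intros simp: power2_eq_square)
  have "((\<lambda>x. 1 / x^2) has_integral ((- 1 / t) - (- 1 / s))) {s..t}"
    by (rule fundamental_theorem_of_calculus) (use assms d in auto)
  then show "((\<lambda>x. 1 / x^2) has_integral (1/s - 1/t)) {s..t}" by simp
  have "((\<lambda>x. 1 / x^2) has_integral ((- 1 / (-s)) - (- 1 / (-t)))) {-t..-s}"
    by (rule fundamental_theorem_of_calculus) (use assms d in auto)
  then show "((\<lambda>x. 1 / x^2) has_integral (1/s - 1/t)) {-t..-s}" by simp
qed

lemma lim_univ:
  fixes h :: "real \<Rightarrow> 'a::banach"
  assumes "h integrable_on UNIV"
  shows "((\<lambda>t. integral {-t..t} h) \<longlongrightarrow> integral UNIV h) at_top"
proof (rule tendstoI)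
  fix e :: real assume e: "e > 0"
  have "(h has_integral integral UNIV h) UNIV" using assms by (rule integrable_integral)
  then obtain B where B: "B > 0" "\<And>a b. ball 0 B \<subseteq> cbox a b \<Longrightarrow>
      norm (integral (cbox a b) h - integral UNIV h) < e"
    unfolding has_integral_alt'[of h _ UNIV] using e by auto
  show "\<forall>\<^sub>F t in at_top. dist (integral {-t..t} h) (integral UNIV h) < e"
    using eventually_ge_at_top[of B]
  proof eventually_elim
    case (elim t)
    have "ball 0 B \<subseteq> cbox (-t) t" using elim by (auto simp: dist_real_def)
    from B(2)[OF this] show ?case by (simp add: dist_norm)
  qed
qed

lemma tail_bound:
  fixes h :: "real \<Rightarrow> 'a::banach"
  assumes hi: "h integrable_on UNIV" and s: "s > 0"
    and b: "\<And>x. \<bar>x\<bar> \<ge> s \<Longrightarrow> norm (h x) \<le> K / x^2"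
  shows "norm (integral UNIV h - integral {-s..s} h) \<le> 2 * K / s"
proof -
  have pt: "norm (integral {-t..t} h - integral {-s..s} h) \<le> 2 * K / s" if t: "t \<ge> s" for t
  proof -
    have i1: "h integrable_on {-t..t}" by (rule integrable_on_subinterval[OF hi]) auto
    have i2: "h integrable_on {-s..t}" by (rule integrable_on_subinterval[OF hi]) auto
    have e1: "integral {-t..-s} h + integral {-s..t} h = integral {-t..t} h"
      by (rule Henstock_Kurzweil_Integration.integral_combine) (use t s i1 in auto)
    have e2: "integral {-s..s} h + integral {s..t} h = integral {-s..t} h"
      by (rule Henstock_Kurzweil_Integration.integral_combine) (use t s i2 in auto)
    have T: "integral {-t..t} h = integral {-t..-s} h + (integral {-s..s} h + integral {s..t} h)"
      using e1 e2 by simp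
    then have eq: "integral {-t..t} h - integral {-s..s} h = integral {-t..-s} h + integral {s..t} h"
      by (simp add: algebra_simps)
    have n1: "norm (integral {s..t} h) \<le> K * (1/s - 1/t)"
    proof -
      have "norm (integral {s..t} h) \<le> integral {s..t} (\<lambda>x. K * (1 / x^2))"
        by (rule integral_norm_bound_integral[OF integrable_on_subinterval[OF hi]
            has_integral_integrable[OF has_integral_mult_right[OF inv_sq_int(1)[OF s t]]]])
          (use b s t in auto)
      also have "\<dots> = K * (1/s - 1/t)"
        using has_integral_mult_right[OF inv_sq_int(1)[OF s t], of K] by (simp add: integral_unique)
      finally show ?thesis .
    qed
    have n2: "norm (integral {-t..-s} h) \<le> K * (1/s - 1/t)"
    proof -
      have "norm (integral {-t..-s} h) \<le> integral {-t..-s} (\<lambda>x. K * (1 / x^2))"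
        by (rule integral_norm_bound_integral[OF integrable_on_subinterval[OF hi]
            has_integral_integrable[OF has_integral_mult_right[OF inv_sq_int(2)[OF s t]]]])
          (use b s t in auto)
      also have "\<dots> = K * (1/s - 1/t)"
        using has_integral_mult_right[OF inv_sq_int(2)[OF s t], of K] by (simp add: integral_unique)
      finally show ?thesis .
    qed
    have "norm (h s) \<le> K / s^2" using b[of s] s by simp
    then have "0 \<le> K / s^2" by (rule order_trans[OF norm_ge_zero])
    then have K: "K \<ge> 0" using s by (simp add: zero_le_divide_iff)
    have "K * (1/s - 1/t) \<le> K / s" using K s t by (simp add: field_simps)
    moreover have "norm (integral {-t..-s} h + integral {s..t} h) \<le> norm (integral {-t..-s} h) + norm (integral {s..t} h)"
      by (rule norm_triangle_ineq)
    ultimately show ?thesis using n1 n2 unfolding eq by linarith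
  qed
  have "\<forall>\<^sub>F t in at_top. norm (integral {-t..t} h - integral {-s..s} h) \<le> 2 * K / s"
    using eventually_ge_at_top[of s] by (rule eventually_mono) (rule pt)
  moreover have "((\<lambda>t. integral {-t..t} h - integral {-s..s} h) \<longlongrightarrow> integral UNIV h - integral {-s..s} h) at_top"
    by (intro tendsto_intros lim_univ hi)
  ultimately show ?thesis by (intro Lim_norm_ubound) auto
qed



definition cc :: "real \<Rightarrow> complex" where "cc k = 1 / (\<i> * of_real k)"
definition bt :: "(real \<Rightarrow> real) \<Rightarrow> real \<Rightarrow> real \<Rightarrow> complex" where
  "bt h k s = of_real (h s) * ef k s - of_real (h (-s)) * ef k (-s)"

lemma ibp:
  fixes g g' :: "real \<Rightarrow> real"
  assumes d: "\<And>x. (g has_real_derivative g' x) (at x)" and c: "continuous_on UNIV g'"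
    and k: "k \<noteq> 0" and ab: "a \<le> b"
  shows "integral {a..b} (\<lambda>x. of_real (g x) * ef k x) =
    cc k * (integral {a..b} (\<lambda>x. of_real (g' x) * ef k x) - (of_real (g b) * ef k b - of_real (g a) * ef k a))"
proof -
  have cg: "continuous_on UNIV g"
    using d by (intro continuous_at_imp_continuous_on ballI DERIV_isCont) auto
  have i1: "(\<lambda>x. of_real (g' x) * ef k x) integrable_on {a..b}"
    by (intro integrable_continuous_interval continuous_intros continuous_on_subset[OF c]) auto
  have i2: "(\<lambda>x. of_real (g x) * ef k x) integrable_on {a..b}"
    by (intro integrable_continuous_interval continuous_intros continuous_on_subset[OF cg]) auto
  have "((\<lambda>x. of_real (g x) * (- (\<i> * of_real k) * ef k x) + of_real (g' x) * ef k x) has_integral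
      (of_real (g b) * ef k b - of_real (g a) * ef k a)) {a..b}"
    by (rule fundamental_theorem_of_calculus[OF ab])
       (auto intro!: derivative_eq_intros d[THEN DERIV_subset] ef_deriv)
  then have X1: "integral {a..b} (\<lambda>x. of_real (g x) * (- (\<i> * of_real k) * ef k x) + of_real (g' x) * ef k x)
      = of_real (g b) * ef k b - of_real (g a) * ef k a" by (rule integral_unique)
  have X2: "integral {a..b} (\<lambda>x. of_real (g x) * (- (\<i> * of_real k) * ef k x) + of_real (g' x) * ef k x)
     = - (\<i> * of_real k) * integral {a..b} (\<lambda>x. of_real (g x) * ef k x) + integral {a..b} (\<lambda>x. of_real (g' x) * ef k x)"
  proof -
    have fe: "(\<lambda>x. of_real (g x) * (- (\<i> * of_real k) * ef k x) + of_real (g' x) * ef k x) =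
       (\<lambda>x. - (\<i> * of_real k) * (of_real (g x) * ef k x) + of_real (g' x) * ef k x)"
      by (rule ext) (simp add: algebra_simps)
    have "integral {a..b} (\<lambda>x. - (\<i> * of_real k) * (of_real (g x) * ef k x) + of_real (g' x) * ef k x)
      = integral {a..b} (\<lambda>x. - (\<i> * of_real k) * (of_real (g x) * ef k x)) + integral {a..b} (\<lambda>x. of_real (g' x) * ef k x)"
      by (rule integral_add[OF integrable_on_mult_right[OF i2] i1])
    then show ?thesis unfolding fe by simp
  qed
  have "- (\<i> * of_real k) * integral {a..b} (\<lambda>x. of_real (g x) * ef k x) =
     (of_real (g b) * ef k b - of_real (g a) * ef k a) - integral {a..b} (\<lambda>x. of_real (g' x) * ef k x)"
    by (rule eq_diff_eq[THEN iffD2, OF trans[OF X2[symmetric] X1]])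
  then show ?thesis using k unfolding cc_def by (simp add: field_simps)
qed

lemma bt_bound:
  assumes b: "\<And>x. 1 \<le> \<bar>x\<bar> \<Longrightarrow> \<bar>h x\<bar> \<le> B / \<bar>x\<bar>" and s: "1 \<le> s"
  shows "norm (bt h k s) \<le> 2 * B / s"
proof -
  have "norm (bt h k s) \<le> norm (of_real (h s) * ef k s) + norm (of_real (h (-s)) * ef k (-s))"
    unfolding bt_def by (rule norm_triangle_ineq4)
  also have "\<dots> = \<bar>h s\<bar> + \<bar>h (-s)\<bar>" by (simp add: norm_mult)
  also have "\<dots> \<le> B / s + B / s" using b[of s] b[of "-s"] s by auto
  finally show ?thesis by simp
qed

lemma bt_lim:
  assumes b: "\<And>x. 1 \<le> \<bar>x\<bar> \<Longrightarrow> \<bar>h x\<bar> \<le> B / \<bar>x\<bar>"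
  shows "((\<lambda>s. bt h k s) \<longlongrightarrow> 0) at_top"
proof (rule Lim_null_comparison)
  show "\<forall>\<^sub>F s in at_top. norm (bt h k s) \<le> 2 * B / s"
    using eventually_ge_at_top[of 1] by eventually_elim (rule bt_bound[OF b])
  show "((\<lambda>s::real. 2 * B / s) \<longlongrightarrow> 0) at_top"
    by (intro tendsto_divide_0[OF tendsto_const] filterlim_at_top_imp_at_infinity filterlim_ident)
qed

lemma osc1:
  fixes g :: "nat \<Rightarrow> real \<Rightarrow> real" and B k :: real
  assumes d: "\<And>i x. i < 3 \<Longrightarrow> (g i has_real_derivative g (Suc i) x) (at x)"
    and c3: "continuous_on UNIV (g 3)"
    and bd: "\<And>i x. i < 3 \<Longrightarrow> 1 \<le> \<bar>x\<bar> \<Longrightarrow> \<bar>g i x\<bar> \<le> B / \<bar>x\<bar>"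
    and int3: "(\<lambda>x. of_real (g 3 x) * ef k x) integrable_on UNIV"
    and k: "k \<noteq> 0"
  shows osc1_eq: "\<And>s. 0 \<le> s \<Longrightarrow> integral {-s..s} (\<lambda>x. of_real (g 0 x) * ef k x) =
      cc k ^ 3 * integral {-s..s} (\<lambda>x. of_real (g 3 x) * ef k x)
      - cc k ^ 3 * bt (g 2) k s - cc k ^ 2 * bt (g 1) k s - cc k * bt (g 0) k s"
    and osc1_lim: "((\<lambda>s. integral {-s..s} (\<lambda>x. of_real (g 0 x) * ef k x)) \<longlongrightarrow>
      cc k ^ 3 * integral UNIV (\<lambda>x. of_real (g 3 x) * ef k x)) at_top"
proof -
  have ci: "continuous_on UNIV (g (Suc i))" if "i < 3" for i
  proof (cases "Suc i < 3")
    case True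
    then show ?thesis using d[of "Suc i"] by (intro continuous_at_imp_continuous_on ballI DERIV_isCont) auto
  next
    case False
    then have "Suc i = 3" using that by auto
    then show ?thesis using c3 by simp
  qed
  have step: "integral {-s..s} (\<lambda>x. of_real (g i x) * ef k x) =
      cc k * (integral {-s..s} (\<lambda>x. of_real (g j x) * ef k x) - bt (g i) k s)"
    if "i < 3" "j = Suc i" "0 \<le> s" for i j s
    using ibp[of "g i" "g (Suc i)" k "-s" s] d[OF that(1)] ci[OF that(1)] k that(2,3)
    unfolding bt_def by simp
  show eq: "integral {-s..s} (\<lambda>x. of_real (g 0 x) * ef k x) =
      cc k ^ 3 * integral {-s..s} (\<lambda>x. of_real (g 3 x) * ef k x)
      - cc k ^ 3 * bt (g 2) k s - cc k ^ 2 * bt (g 1) k s - cc k * bt (g 0) k s" if "0 \<le> s" for s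
  proof -
    have e0: "integral {-s..s} (\<lambda>x. of_real (g 0 x) * ef k x) =
      cc k * (integral {-s..s} (\<lambda>x. of_real (g 1 x) * ef k x) - bt (g 0) k s)"
      by (rule step) (use that in auto)
    have e1: "integral {-s..s} (\<lambda>x. of_real (g 1 x) * ef k x) =
      cc k * (integral {-s..s} (\<lambda>x. of_real (g 2 x) * ef k x) - bt (g 1) k s)"
      by (rule step) (use that in auto)
    have e2: "integral {-s..s} (\<lambda>x. of_real (g 2 x) * ef k x) =
      cc k * (integral {-s..s} (\<lambda>x. of_real (g 3 x) * ef k x) - bt (g 2) k s)"
      by (rule step) (use that in auto)
    show ?thesis unfolding e0 e1 e2 by (simp add: algebra_simps power3_eq_cube power2_eq_square)
  qed
  have "((\<lambda>s. cc k ^ 3 * integral {-s..s} (\<lambda>x. of_real (g 3 x) * ef k x)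
      - cc k ^ 3 * bt (g 2) k s - cc k ^ 2 * bt (g 1) k s - cc k * bt (g 0) k s) \<longlongrightarrow>
      cc k ^ 3 * integral UNIV (\<lambda>x. of_real (g 3 x) * ef k x)) at_top"
  proof -
    have l3: "((\<lambda>s. integral {-s..s} (\<lambda>x. of_real (g 3 x) * ef k x)) \<longlongrightarrow>
      integral UNIV (\<lambda>x. of_real (g 3 x) * ef k x)) at_top" by (rule lim_univ[OF int3])
    have b0: "((\<lambda>s. bt (g i) k s) \<longlongrightarrow> 0) at_top" if "i < 3" for i
      by (rule bt_lim[of _ B]) (rule bd[OF that])
    have "((\<lambda>s. cc k ^ 3 * integral {-s..s} (\<lambda>x. of_real (g 3 x) * ef k x)
      - cc k ^ 3 * bt (g 2) k s - cc k ^ 2 * bt (g 1) k s - cc k * bt (g 0) k s) \<longlongrightarrow>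
      cc k ^ 3 * integral UNIV (\<lambda>x. of_real (g 3 x) * ef k x) - cc k ^ 3 * 0 - cc k ^ 2 * 0 - cc k * 0) at_top"
      by (intro tendsto_diff tendsto_mult tendsto_const l3 b0) auto
    then show ?thesis by simp
  qed
  then show "((\<lambda>s. integral {-s..s} (\<lambda>x. of_real (g 0 x) * ef k x)) \<longlongrightarrow>
      cc k ^ 3 * integral UNIV (\<lambda>x. of_real (g 3 x) * ef k x)) at_top"
  proof (rule Lim_transform_eventually)
    show "\<forall>\<^sub>F s in at_top. cc k ^ 3 * integral {-s..s} (\<lambda>x. of_real (g 3 x) * ef k x)
      - cc k ^ 3 * bt (g 2) k s - cc k ^ 2 * bt (g 1) k s - cc k * bt (g 0) k s =
      integral {-s..s} (\<lambda>x. of_real (g 0 x) * ef k x)"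
      using eventually_ge_at_top[of 0] by (rule eventually_mono) (rule eq[symmetric])
  qed
qed



lemma int_bound:
  fixes h :: "real \<Rightarrow> complex"
  assumes c: "continuous_on UNIV h" and a: "a > 0" and b: "\<And>x. norm (h x) \<le> M / (a^2 + x^2)"
  shows "h integrable_on UNIV" "norm (integral UNIV h) \<le> M * pi / a"
proof -
  have "norm (h 0) \<le> M / a^2" using b[of 0] by simp
  then have "0 \<le> M / a^2" by (rule order_trans[OF norm_ge_zero])
  then have M: "M \<ge> 0" using a by (simp add: zero_le_divide_iff)
  have gi: "((\<lambda>x. M * (1 / (a^2 + x^2))) has_integral M * (pi / a)) UNIV"
    by (rule has_integral_mult_right[OF arct_int[OF a]])
  have "h absolutely_integrable_on UNIV"
    by (rule measurable_bounded_by_integrable_imp_absolutely_integrable[where g = "\<lambda>x. M * (1 / (a^2 + x^2))"])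
       (use c gi b in \<open>auto intro: continuous_imp_measurable_on_sets_lebesgue has_integral_integrable\<close>)
  then show hi: "h integrable_on UNIV" by (rule set_lebesgue_integral_eq_integral(1))
  have "norm (integral UNIV h) \<le> integral UNIV (\<lambda>x. M * (1 / (a^2 + x^2)))"
    by (rule integral_norm_bound_integral[OF hi has_integral_integrable[OF gi]]) (use b in auto)
  also have "\<dots> = M * pi / a" using gi by (simp add: integral_unique)
  finally show "norm (integral UNIV h) \<le> M * pi / a" .
qed

lemma int_r_bound:
  fixes h :: "real \<Rightarrow> complex"
  assumes hi: "h integrable_on {-r..r}" and a: "a > 0" and b: "\<And>x. norm (h x) \<le> M / (a^2 + x^2)"
  shows "norm (integral {-r..r} h) \<le> M * pi / a"
proof -
  have "norm (h 0) \<le> M / a^2" using b[of 0] by simp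
  then have "0 \<le> M / a^2" by (rule order_trans[OF norm_ge_zero])
  then have M: "M \<ge> 0" using a by (simp add: zero_le_divide_iff)
  have gi: "((\<lambda>x. M * (1 / (a^2 + x^2))) has_integral M * (pi / a)) UNIV"
    by (rule has_integral_mult_right[OF arct_int[OF a]])
  have gr: "(\<lambda>x. M * (1 / (a^2 + x^2))) integrable_on {-r..r}"
    by (rule integrable_on_subinterval[OF has_integral_integrable[OF gi]]) auto
  have "norm (integral {-r..r} h) \<le> integral {-r..r} (\<lambda>x. M * (1 / (a^2 + x^2)))"
    by (rule integral_norm_bound_integral[OF hi gr]) (use b in auto)
  also have "\<dots> \<le> integral UNIV (\<lambda>x. M * (1 / (a^2 + x^2)))"
    by (rule integral_subset_le[OF _ gr has_integral_integrable[OF gi]])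
       (use M a in \<open>auto intro!: add_pos_nonneg\<close>)
  also have "\<dots> = M * pi / a" using gi by (simp add: integral_unique)
  finally show ?thesis .
qed

lemma bt_norm: "norm (bt h k s) \<le> \<bar>h s\<bar> + \<bar>h (-s)\<bar>"
proof -
  have "norm (bt h k s) \<le> norm (of_real (h s) * ef k s) + norm (of_real (h (-s)) * ef k (-s))"
    unfolding bt_def by (rule norm_triangle_ineq4)
  also have "\<dots> = \<bar>h s\<bar> + \<bar>h (-s)\<bar>" by (simp add: norm_mult)
  finally show ?thesis .
qed

lemma cont_x:
  assumes "continuous_on UNIV (\<lambda>(x,y). p x y)" shows "continuous_on S (\<lambda>x. p x y)"
proof -
  have "continuous_on UNIV ((\<lambda>(x,y). p x y) \<circ> (\<lambda>x. (x, y)))"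
    by (rule continuous_on_compose) (auto intro!: continuous_intros continuous_on_subset[OF assms])
  then have "continuous_on UNIV (\<lambda>x. p x y)" by (simp add: o_def)
  then show ?thesis by (rule continuous_on_subset) simp
qed

lemma cont_y:
  assumes "continuous_on UNIV (\<lambda>(x,y). p x y)" shows "continuous_on S (\<lambda>y. p x y)"
proof -
  have "continuous_on UNIV ((\<lambda>(x,y). p x y) \<circ> (\<lambda>y. (x, y)))"
    by (rule continuous_on_compose) (auto intro!: continuous_intros continuous_on_subset[OF assms])
  then have "continuous_on UNIV (\<lambda>y. p x y)" by (simp add: o_def)
  then show ?thesis by (rule continuous_on_subset) simp
qed

lemma cont_sw:
  fixes p :: "'a::topological_space \<Rightarrow> 'b::topological_space \<Rightarrow> 'c::topological_space"
  assumes "continuous_on UNIV (\<lambda>(x,y). p x y)" shows "continuous_on S (\<lambda>z. p (snd z) (fst z))"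
proof -
  have "continuous_on UNIV ((\<lambda>(x,y). p x y) \<circ> (\<lambda>z::'b\<times>'a. (snd z, fst z)))"
    by (rule continuous_on_compose) (auto intro!: continuous_intros continuous_on_subset[OF assms])
  then have "continuous_on UNIV (\<lambda>z::'b\<times>'a. p (snd z) (fst z))" by (simp add: o_def case_prod_unfold)
  then show ?thesis by (rule continuous_on_subset) simp
qed

lemma param_cont:
  assumes "continuous_on UNIV (\<lambda>(x,y). p x y)"
  shows "continuous_on S (\<lambda>y. integral {-s..s} (\<lambda>x. of_real (p x y) * ef k x))"
proof -
  have "continuous_on (S \<times> cbox (-s) s) (\<lambda>(y, x). of_real (p x y) * ef k x)"
    unfolding case_prod_unfold
    by (intro continuous_intros continuous_on_compose2[OF ef_cont[of UNIV k]] cont_sw[OF assms]) auto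
  from integral_continuous_on_param[OF this] show ?thesis by simp
qed



lemma sq_pow2: "sqrt (1 + x^2 + y^2) ^ 2 = 1 + x^2 + (y::real)^2"
  by (simp add: add_nonneg_nonneg)

lemma sq_ge1: "1 \<le> sqrt (1 + x^2 + (y::real)^2)"
  by (simp add: add_nonneg_nonneg)

lemma sq_gex: "\<bar>x\<bar> \<le> sqrt (1 + x^2 + (y::real)^2)"
proof -
  have "\<bar>x\<bar> = sqrt (x^2)" by simp
  also have "\<dots> \<le> sqrt (1 + x^2 + y^2)" by (rule real_sqrt_le_mono) simp
  finally show ?thesis .
qed

lemma sq_pow4: "sqrt (1 + x^2 + y^2) ^ 4 = (1 + x^2 + (y::real)^2)^2"
proof -
  have "sqrt (1 + x^2 + y^2) ^ 4 = (sqrt (1 + x^2 + y^2) ^ 2)^2"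
    using power_mult[of "sqrt (1 + x^2 + y^2)" 2 2] by simp
  then show ?thesis by (simp only: sq_pow2)
qed

lemma sq_pow3: "sqrt (1 + x^2 + y^2) ^ 3 = (1 + x^2 + (y::real)^2) * sqrt (1 + x^2 + y^2)"
proof -
  have "sqrt (1 + x^2 + y^2) ^ 3 = sqrt (1 + x^2 + y^2) ^ 2 * sqrt (1 + x^2 + y^2)"
    by (simp add: power3_eq_cube power2_eq_square)
  then show ?thesis by (simp only: sq_pow2)
qed

lemma b_gen: "0 \<le> (C::real) \<Longrightarrow> 0 < d \<Longrightarrow> d \<le> D \<Longrightarrow> C / D \<le> C / d"
  by (simp add: divide_left_mono)

lemma b3a:
  assumes C: "0 \<le> C"
  shows "C / sqrt (1 + x^2 + y^2) ^ 4 \<le> (C / (1 + y^2)) / (1^2 + (x::real)^2)"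
proof -
  have a: "0 \<le> x^2" "0 \<le> y^2" by simp_all
  have "(1 + y^2) * (1 + x^2) \<le> (1 + x^2 + y^2) * (1 + x^2 + y^2)"
    using a by (intro mult_mono) auto
  then have "(1 + y^2) * (1 + x^2) \<le> (1 + x^2 + y^2)^2" by (simp add: power2_eq_square)
  moreover have "0 < (1 + y^2) * (1 + x^2)" by (simp add: add_pos_nonneg)
  ultimately have "C / (1 + x^2 + y^2)^2 \<le> C / ((1 + y^2) * (1 + x^2))" by (metis b_gen[OF C])
  then show ?thesis by (simp add: sq_pow4)
qed

lemma b3b:
  assumes C: "0 \<le> C" and s: "0 < s" "s \<le> \<bar>x\<bar>"
  shows "C / sqrt (1 + x^2 + y^2) ^ 4 \<le> (C / (s^2 + y^2)) / (x::real)^2"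
proof -
  have "s^2 \<le> x^2" using s by (metis abs_le_square_iff abs_of_pos)
  then have "(s^2 + y^2) * x^2 \<le> (1 + x^2 + y^2) * (1 + x^2 + y^2)"
    by (intro mult_mono) auto
  moreover have "0 < (s^2 + y^2) * x^2"
  proof -
    have "x \<noteq> 0" using s by auto
    then have "0 < x^2" by simp
    moreover have "0 < s^2 + y^2" using s by (simp add: add_pos_nonneg)
    ultimately show ?thesis by simp
  qed
  ultimately have "C / ((1 + x^2 + y^2) * (1 + x^2 + y^2)) \<le> C / ((s^2 + y^2) * x^2)" by (metis b_gen[OF C])
  then show ?thesis unfolding sq_pow4 by (simp add: power2_eq_square)
qed

lemma b2:
  assumes C: "0 \<le> C" and s: "0 < s" "\<bar>x\<bar> = s"
  shows "C / sqrt (1 + x^2 + y^2) ^ 3 \<le> (C / s) / (s^2 + (y::real)^2)"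
proof -
  have x2: "x^2 = s^2" using s by (metis power2_abs)
  have "s \<le> sqrt (1 + x^2 + y^2)" using sq_gex[of x y] s by simp
  then have "(s^2 + y^2) * s \<le> (1 + x^2 + y^2) * sqrt (1 + x^2 + y^2)"
    using x2 s by (intro mult_mono) auto
  moreover have "0 < (s^2 + y^2) * s"
  proof -
    have "0 < s^2 + y^2" using s by (simp add: add_pos_nonneg)
    then show ?thesis using s by simp
  qed
  ultimately have "C / ((1 + x^2 + y^2) * sqrt (1 + x^2 + y^2)) \<le> C / ((s^2 + y^2) * s)" by (metis b_gen[OF C])
  then show ?thesis by (simp add: sq_pow3 mult.commute)
qed

lemma b1:
  assumes C: "0 \<le> C" and s: "0 < s" "\<bar>x\<bar> = s"
  shows "C / sqrt (1 + x^2 + y^2) ^ 2 \<le> C / (s^2 + (y::real)^2)"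
proof -
  have x2: "x^2 = s^2" using s by (metis power2_abs)
  have "0 < s^2 + y^2" using s by (auto intro!: add_pos_nonneg)
  moreover have "s^2 + y^2 \<le> 1 + x^2 + y^2" using x2 by simp
  ultimately show ?thesis unfolding sq_pow2 by (rule b_gen[OF C])
qed

lemma b0:
  assumes C: "0 \<le> C" and n: "1 \<le> n" and x: "x \<noteq> 0"
  shows "C / sqrt (1 + x^2 + y^2) ^ n \<le> C / \<bar>x::real\<bar>"
proof -
  have "\<bar>x\<bar> \<le> sqrt (1 + x^2 + y^2)" by (rule sq_gex)
  also have "\<dots> \<le> sqrt (1 + x^2 + y^2) ^ n"
    using sq_ge1[of x y] n by (metis power_increasing power_one_right)
  finally show ?thesis using x by (intro b_gen[OF C]) auto
qed



lemma div_le_self: "0 \<le> (a::real) \<Longrightarrow> 1 \<le> s \<Longrightarrow> a / s \<le> a"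
proof -
  assume a: "0 \<le> a" and s: "1 \<le> s"
  have "a * 1 \<le> a * s" by (rule mult_left_mono[OF s a])
  then show ?thesis using s by (simp add: divide_le_eq)
qed

lemma lem2:
  fixes px :: "nat \<Rightarrow> real \<Rightarrow> real \<Rightarrow> real" and psi :: "real \<Rightarrow> real \<Rightarrow> real"
  assumes dx: "\<And>i x y. i < 3 \<Longrightarrow> ((\<lambda>t. px i t y) has_real_derivative px (Suc i) x y) (at x)"
    and dy: "\<And>x y. ((\<lambda>t. px 0 x t) has_real_derivative psi x y) (at y)"
    and cx: "\<And>i. i \<le> 3 \<Longrightarrow> continuous_on UNIV (\<lambda>(x,y). px i x y)"
    and cy: "continuous_on UNIV (\<lambda>(x,y). psi x y)"
    and bx: "\<And>i x y. i \<le> 3 \<Longrightarrow> \<bar>px i x y\<bar> \<le> C / sqrt (1 + x^2 + y^2) ^ Suc i"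
    and bp: "\<And>x y. \<bar>psi x y\<bar> \<le> C / sqrt (1 + x^2 + y^2) ^ 2"
    and k1: "k1 \<noteq> 0" and k2: "k2 \<noteq> 0"
  shows lem2_lim: "\<And>y. ((\<lambda>s. integral {-s..s} (\<lambda>x. of_real (px 0 x y) * ef k1 x)) \<longlongrightarrow>
         cc k1 ^ 3 * integral UNIV (\<lambda>x. of_real (px 3 x y) * ef k1 x)) at_top"
   and lem2_int: "((\<lambda>y. cc k1 ^ 3 * integral UNIV (\<lambda>x. of_real (px 3 x y) * ef k1 x) * ef k2 y) has_integral
         integral UNIV (\<lambda>y. cc k1 ^ 3 * integral UNIV (\<lambda>x. of_real (px 3 x y) * ef k1 x) * ef k2 y)) UNIV"
   and lem2_dlim: "((\<lambda>(r,s). integral {-r..r} (\<lambda>y. integral {-s..s} (\<lambda>x. of_real (px 0 x y) * ef k1 x * ef k2 y))) \<longlongrightarrow>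
         integral UNIV (\<lambda>y. cc k1 ^ 3 * integral UNIV (\<lambda>x. of_real (px 3 x y) * ef k1 x) * ef k2 y)) (at_top \<times>\<^sub>F at_top)"
proof -
  define G where "G y = integral UNIV (\<lambda>x. of_real (px 3 x y) * ef k1 x)" for y
  define A where "A y = cc k1 ^ 3 * G y" for y
  define L where "L = integral UNIV (\<lambda>y. A y * ef k2 y)"
  have "\<bar>px 0 0 0\<bar> \<le> C" using bx[of 0 0 0] by simp
  then have C: "0 \<le> C" by (rule order_trans[OF abs_ge_zero])
  have c3x: "continuous_on UNIV (\<lambda>x. px 3 x y)" for y by (rule cont_x[OF cx]) simp
  have int3: "(\<lambda>x. of_real (px 3 x y) * ef k1 x) integrable_on UNIV"
    and Gb: "norm (G y) \<le> C / (1 + y^2) * pi" for y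
  proof -
    have c: "continuous_on UNIV (\<lambda>x. of_real (px 3 x y) * ef k1 x)"
      by (intro continuous_intros c3x ef_cont)
    have b: "norm (of_real (px 3 x y) * ef k1 x) \<le> (C / (1 + y^2)) / (1^2 + x^2)" for x
    proof -
      have "norm (of_real (px 3 x y) * ef k1 x) = \<bar>px 3 x y\<bar>" by (simp add: norm_mult)
      also have "\<dots> \<le> C / sqrt (1 + x^2 + y^2) ^ 4" using bx[of 3 x y] by (simp add: numeral_eq_Suc)
      also have "\<dots> \<le> (C / (1 + y^2)) / (1^2 + x^2)" by (rule b3a[OF C])
      finally show ?thesis .
    qed
    show "(\<lambda>x. of_real (px 3 x y) * ef k1 x) integrable_on UNIV" by (rule int_bound(1)[OF c _ b]) simp
    have "norm (G y) \<le> (C / (1 + y^2)) * pi / 1" unfolding G_def by (rule int_bound(2)[OF c _ b]) simp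
    then show "norm (G y) \<le> C / (1 + y^2) * pi" by simp
  qed
  have osc: "integral {-s..s} (\<lambda>x. of_real (px 0 x y) * ef k1 x) =
      cc k1 ^ 3 * integral {-s..s} (\<lambda>x. of_real (px 3 x y) * ef k1 x)
      - cc k1 ^ 3 * bt (\<lambda>x. px 2 x y) k1 s - cc k1 ^ 2 * bt (\<lambda>x. px 1 x y) k1 s - cc k1 * bt (\<lambda>x. px 0 x y) k1 s"
    if "0 \<le> s" for y s
  proof -
    have d: "((\<lambda>x. px i x y) has_real_derivative px (Suc i) x y) (at x)" if "i < 3" for i x using dx[OF that] .
    have bd: "\<bar>px i x y\<bar> \<le> C / \<bar>x\<bar>" if "i < 3" "1 \<le> \<bar>x\<bar>" for i x
      using bx[of i x y] b0[OF C, of "Suc i" x y] that by force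
    show ?thesis
      by (rule osc1_eq[where g = "\<lambda>i x. px i x y" and B = C and k = k1, OF d _ bd int3 k1 that])
         (use c3x in auto)
  qed
  have oscl: "((\<lambda>s. integral {-s..s} (\<lambda>x. of_real (px 0 x y) * ef k1 x)) \<longlongrightarrow> A y) at_top" for y
  proof -
    have d: "((\<lambda>x. px i x y) has_real_derivative px (Suc i) x y) (at x)" if "i < 3" for i x using dx[OF that] .
    have bd: "\<bar>px i x y\<bar> \<le> C / \<bar>x\<bar>" if "i < 3" "1 \<le> \<bar>x\<bar>" for i x
      using bx[of i x y] b0[OF C, of "Suc i" x y] that by force
    show ?thesis unfolding A_def G_def
      by (rule osc1_lim[where g = "\<lambda>i x. px i x y" and B = C and k = k1, OF d _ bd int3 k1])
         (use c3x in auto)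
  qed
  have tail: "norm (G y - integral {-s..s} (\<lambda>x. of_real (px 3 x y) * ef k1 x)) \<le> 2 * (C / (s^2 + y^2)) / s"
    if s: "0 < s" for y s
  proof -
    have "norm (of_real (px 3 x y) * ef k1 x) \<le> (C / (s^2 + y^2)) / x^2" if "s \<le> \<bar>x\<bar>" for x
    proof -
      have "norm (of_real (px 3 x y) * ef k1 x) = \<bar>px 3 x y\<bar>" by (simp add: norm_mult)
      also have "\<dots> \<le> C / sqrt (1 + x^2 + y^2) ^ 4" using bx[of 3 x y] by (simp add: numeral_eq_Suc)
      also have "\<dots> \<le> (C / (s^2 + y^2)) / x^2" by (rule b3b[OF C s that])
      finally show ?thesis .
    qed
    then show ?thesis unfolding G_def by (rule tail_bound[OF int3 s])
  qed
  have tail1: "norm (G y - integral {-s..s} (\<lambda>x. of_real (px 3 x y) * ef k1 x)) \<le> 2 * C / s"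
    if s: "1 \<le> s" for y s
  proof -
    have "1 \<le> s^2" using s by (simp add: one_le_power)
    then have "1 \<le> s^2 + y^2" using zero_le_power2[of y] by linarith
    then have "C / (s^2 + y^2) \<le> C / 1" by (intro b_gen[OF C]) auto
    then have "2 * (C / (s^2 + y^2)) \<le> 2 * C" by simp
    then have "2 * (C / (s^2 + y^2)) / s \<le> 2 * C / s" by (rule divide_right_mono) (use s in simp)
    then show ?thesis using tail[of s y] s by simp
  qed
  have Gc: "continuous_on UNIV G"
  proof (rule uniform_limit_theorem[where F = at_top and f = "\<lambda>s y. integral {-s..s} (\<lambda>x. of_real (px 3 x y) * ef k1 x)"])
    show "\<forall>\<^sub>F s in at_top. continuous_on UNIV (\<lambda>y. integral {-s..s} (\<lambda>x. of_real (px 3 x y) * ef k1 x))"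
      by (intro always_eventually allI param_cont cx) simp
    show "uniform_limit UNIV (\<lambda>s y. integral {-s..s} (\<lambda>x. of_real (px 3 x y) * ef k1 x)) G at_top"
    proof (rule uniform_limitI)
      fix e :: real assume e: "0 < e"
      show "\<forall>\<^sub>F s in at_top. \<forall>y\<in>UNIV. dist (integral {-s..s} (\<lambda>x. of_real (px 3 x y) * ef k1 x)) (G y) < e"
        using eventually_ge_at_top[of "max 1 (4 * C / e)"]
      proof eventually_elim
        case (elim s)
        then have s1: "1 \<le> s" and s2: "4 * C / e \<le> s" by auto
        have "4 * C \<le> e * s" using s2 e by (simp add: pos_divide_le_eq mult.commute)
        then have "2 * C < e * s" using C e s1 by (cases "C = 0") auto
        then have lt: "2 * C / s < e" using s1 by (simp add: divide_less_eq mult.commute)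
        show ?case
        proof
          fix y :: real
          have "norm (G y - integral {-s..s} (\<lambda>x. of_real (px 3 x y) * ef k1 x)) < e"
            using tail1[OF s1, of y] lt by linarith
          then show "dist (integral {-s..s} (\<lambda>x. of_real (px 3 x y) * ef k1 x)) (G y) < e"
            by (simp add: dist_norm norm_minus_commute)
        qed
      qed
    qed
  qed simp
  have Ac: "continuous_on UNIV (\<lambda>y. A y * ef k2 y)"
    unfolding A_def by (intro continuous_intros Gc ef_cont)
  have Ab: "norm (A y * ef k2 y) \<le> (norm (cc k1)^3 * C * pi) / (1^2 + y^2)" for y
  proof -
    have "norm (A y * ef k2 y) = norm (cc k1)^3 * norm (G y)" unfolding A_def by (simp add: norm_mult norm_power)
    also have "\<dots> \<le> norm (cc k1)^3 * (C / (1 + y^2) * pi)" by (rule mult_left_mono[OF Gb]) simp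
    also have "\<dots> = (norm (cc k1)^3 * C * pi) / (1^2 + y^2)" by simp
    finally show ?thesis .
  qed
  have AI: "(\<lambda>y. A y * ef k2 y) integrable_on UNIV" by (rule int_bound(1)[OF Ac _ Ab]) simp
  show "\<And>y. ((\<lambda>s. integral {-s..s} (\<lambda>x. of_real (px 0 x y) * ef k1 x)) \<longlongrightarrow>
         cc k1 ^ 3 * integral UNIV (\<lambda>x. of_real (px 3 x y) * ef k1 x)) at_top"
    using oscl unfolding A_def G_def .
  show "((\<lambda>y. cc k1 ^ 3 * integral UNIV (\<lambda>x. of_real (px 3 x y) * ef k1 x) * ef k2 y) has_integral
         integral UNIV (\<lambda>y. cc k1 ^ 3 * integral UNIV (\<lambda>x. of_real (px 3 x y) * ef k1 x) * ef k2 y)) UNIV"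
    using integrable_integral[OF AI] unfolding A_def G_def .
  show "((\<lambda>(r,s). integral {-r..r} (\<lambda>y. integral {-s..s} (\<lambda>x. of_real (px 0 x y) * ef k1 x * ef k2 y))) \<longlongrightarrow>
         integral UNIV (\<lambda>y. cc k1 ^ 3 * integral UNIV (\<lambda>x. of_real (px 3 x y) * ef k1 x) * ef k2 y)) (at_top \<times>\<^sub>F at_top)"
  proof -
  define K0 where "K0 = (norm (cc k1)^3 * 4 * C + norm (cc k1)^2 * 2 * C) * pi
     + norm (cc k1) * (2 * (norm (cc k2) * (C * pi + 2 * C)))"
  have main: "norm (integral {-r..r} (\<lambda>y. integral {-s..s} (\<lambda>x. of_real (px 0 x y) * ef k1 x * ef k2 y))
      - integral {-r..r} (\<lambda>y. A y * ef k2 y)) \<le> K0 / s" if s1: "1 \<le> s" and r0: "0 \<le> r" for r s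
  proof -
    have s0: "0 < s" using s1 by simp
    define H where "H y = integral {-s..s} (\<lambda>x. of_real (px 3 x y) * ef k1 x)" for y
    define P where "P y = cc k1 ^ 3 * (H y - G y) * ef k2 y - cc k1 ^ 3 * bt (\<lambda>x. px 2 x y) k1 s * ef k2 y
       - cc k1 ^ 2 * bt (\<lambda>x. px 1 x y) k1 s * ef k2 y" for y
    define Q where "Q y = bt (\<lambda>x. px 0 x y) k1 s * ef k2 y" for y
    have pw: "integral {-s..s} (\<lambda>x. of_real (px 0 x y) * ef k1 x * ef k2 y) = A y * ef k2 y + P y - cc k1 * Q y" for y
    proof -
      have "integral {-s..s} (\<lambda>x. of_real (px 0 x y) * ef k1 x * ef k2 y) =
          integral {-s..s} (\<lambda>x. of_real (px 0 x y) * ef k1 x) * ef k2 y" by (rule integral_mult_left)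
      also have "\<dots> = A y * ef k2 y + P y - cc k1 * Q y"
        unfolding osc[OF less_imp_le[OF s0]] A_def P_def Q_def H_def by (simp add: algebra_simps)
      finally show ?thesis .
    qed
    have btc: "continuous_on UNIV (\<lambda>y. bt (\<lambda>x. px i x y) k1 s)" if "i \<le> 3" for i
      unfolding bt_def by (intro continuous_intros cont_y[OF cx[OF that]])
    have Hc: "continuous_on UNIV H" unfolding H_def by (rule param_cont[OF cx]) simp
    have Pc: "continuous_on UNIV P" unfolding P_def by (intro continuous_intros Hc Gc btc ef_cont) auto
    have Qc: "continuous_on UNIV Q" unfolding Q_def by (intro continuous_intros btc ef_cont) auto
    have Pi: "P integrable_on {-r..r}" by (rule integrable_continuous_interval[OF continuous_on_subset[OF Pc]]) simp
    have Qi: "Q integrable_on {-r..r}" by (rule integrable_continuous_interval[OF continuous_on_subset[OF Qc]]) simp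
    have Ai: "(\<lambda>y. A y * ef k2 y) integrable_on {-r..r}"
      by (rule integrable_continuous_interval[OF continuous_on_subset[OF Ac]]) simp
    have I_eq: "integral {-r..r} (\<lambda>y. integral {-s..s} (\<lambda>x. of_real (px 0 x y) * ef k1 x * ef k2 y))
       - integral {-r..r} (\<lambda>y. A y * ef k2 y) = integral {-r..r} P - cc k1 * integral {-r..r} Q"
    proof -
      have "integral {-r..r} (\<lambda>y. integral {-s..s} (\<lambda>x. of_real (px 0 x y) * ef k1 x * ef k2 y))
          = integral {-r..r} (\<lambda>y. (A y * ef k2 y + P y) - cc k1 * Q y)" by (simp only: pw)
      also have "\<dots> = integral {-r..r} (\<lambda>y. A y * ef k2 y + P y) - integral {-r..r} (\<lambda>y. cc k1 * Q y)"
        by (rule integral_diff[OF integrable_add[OF Ai Pi] integrable_on_mult_right[OF Qi]])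
      also have "\<dots> = integral {-r..r} (\<lambda>y. A y * ef k2 y) + integral {-r..r} P - cc k1 * integral {-r..r} Q"
        by (simp add: integral_add[OF Ai Pi])
      finally show ?thesis by simp
    qed
    define M1 where "M1 = norm (cc k1)^3 * 4 * C + norm (cc k1)^2 * 2 * C"
    have y2: "0 < s^2 + y^2" for y using s0 by (simp add: add_pos_nonneg)
    have bt2: "norm (bt (\<lambda>x. px 2 x y) k1 s) \<le> 2 * C / (s^2 + y^2)" for y
    proof -
      have "\<bar>px 2 z y\<bar> \<le> C / (s^2 + y^2)" if z: "\<bar>z\<bar> = s" for z
      proof -
        have "\<bar>px 2 z y\<bar> \<le> C / sqrt (1 + z^2 + y^2) ^ 3" using bx[of 2 z y] by (simp add: numeral_eq_Suc)
        also have "\<dots> \<le> (C / s) / (s^2 + y^2)" by (rule b2[OF C s0 z])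
        also have "\<dots> \<le> C / (s^2 + y^2)"
          by (rule divide_right_mono[OF div_le_self[OF C s1]]) (use y2[of y] in simp)
        finally show ?thesis .
      qed
      note zb = this
      have "\<bar>px 2 s y\<bar> \<le> C / (s^2 + y^2)" using zb[of s] s0 by simp
      moreover have "\<bar>px 2 (-s) y\<bar> \<le> C / (s^2 + y^2)" using zb[of "-s"] s0 by simp
      ultimately have "norm (bt (\<lambda>x. px 2 x y) k1 s) \<le> C / (s^2 + y^2) + C / (s^2 + y^2)"
        using bt_norm[of "\<lambda>x. px 2 x y" k1 s] by linarith
      then show ?thesis by simp
    qed
    have bt1: "norm (bt (\<lambda>x. px 1 x y) k1 s) \<le> 2 * C / (s^2 + y^2)" for y
    proof -
      have "\<bar>px 1 z y\<bar> \<le> C / (s^2 + y^2)" if z: "\<bar>z\<bar> = s" for z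
      proof -
        have "\<bar>px 1 z y\<bar> \<le> C / sqrt (1 + z^2 + y^2) ^ 2" using bx[of 1 z y] by (simp add: numeral_eq_Suc)
        also have "\<dots> \<le> C / (s^2 + y^2)" by (rule b1[OF C s0 z])
        finally show ?thesis .
      qed
      note zb = this
      have "\<bar>px 1 s y\<bar> \<le> C / (s^2 + y^2)" using zb[of s] s0 by simp
      moreover have "\<bar>px 1 (-s) y\<bar> \<le> C / (s^2 + y^2)" using zb[of "-s"] s0 by simp
      ultimately have "norm (bt (\<lambda>x. px 1 x y) k1 s) \<le> C / (s^2 + y^2) + C / (s^2 + y^2)"
        using bt_norm[of "\<lambda>x. px 1 x y" k1 s] by linarith
      then show ?thesis by simp
    qed
    have HG: "norm (H y - G y) \<le> 2 * C / (s^2 + y^2)" for y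
    proof -
      have "norm (H y - G y) \<le> 2 * (C / (s^2 + y^2)) / s"
        using tail[OF s0, of y] unfolding H_def by (simp add: norm_minus_commute)
      also have "\<dots> \<le> 2 * (C / (s^2 + y^2))"
        by (rule div_le_self) (use C y2[of y] s1 in auto)
      finally show ?thesis by simp
    qed
    have Pb: "norm (P y) \<le> M1 / (s^2 + y^2)" for y
    proof -
      have "norm (P y) \<le> norm (cc k1 ^ 3 * (H y - G y) * ef k2 y) + norm (cc k1 ^ 3 * bt (\<lambda>x. px 2 x y) k1 s * ef k2 y)
         + norm (cc k1 ^ 2 * bt (\<lambda>x. px 1 x y) k1 s * ef k2 y)"
        unfolding P_def by (rule order_trans[OF norm_triangle_ineq4]) (intro add_mono order_refl norm_triangle_ineq4)
      also have "\<dots> = norm (cc k1)^3 * norm (H y - G y) + norm (cc k1)^3 * norm (bt (\<lambda>x. px 2 x y) k1 s)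
         + norm (cc k1)^2 * norm (bt (\<lambda>x. px 1 x y) k1 s)" by (simp add: norm_mult norm_power)
      also have "\<dots> \<le> norm (cc k1)^3 * (2 * C / (s^2 + y^2)) + norm (cc k1)^3 * (2 * C / (s^2 + y^2))
         + norm (cc k1)^2 * (2 * C / (s^2 + y^2))"
        by (intro add_mono mult_left_mono HG bt1 bt2) auto
      also have "\<dots> = M1 / (s^2 + y^2)"
      proof -
        have "s^2 + y^2 \<noteq> 0" using y2[of y] by linarith
        then show ?thesis unfolding M1_def by (simp add: add_divide_distrib algebra_simps)
      qed
      finally show ?thesis .
    qed
    have nP: "norm (integral {-r..r} P) \<le> M1 * pi / s" by (rule int_r_bound[OF Pi s0 Pb])
    have sig: "norm (integral {-r..r} (\<lambda>y. of_real (px 0 z y) * ef k2 y)) \<le> norm (cc k2) * (C * pi / s + 2 * C / s)"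
      if z: "\<bar>z\<bar> = s" for z
    proof -
      have cpsi: "continuous_on UNIV (psi z)" using cont_y[OF cy, of UNIV z] by simp
      have e: "integral {-r..r} (\<lambda>y. of_real (px 0 z y) * ef k2 y) = cc k2 * (integral {-r..r} (\<lambda>y. of_real (psi z y) * ef k2 y)
          - (of_real (px 0 z r) * ef k2 r - of_real (px 0 z (-r)) * ef k2 (-r)))"
        by (rule ibp[OF dy cpsi k2]) (use r0 in simp)
      have pi: "(\<lambda>y. of_real (psi z y) * ef k2 y) integrable_on {-r..r}"
        by (intro integrable_continuous_interval continuous_intros continuous_on_subset[OF cpsi] ef_cont) auto
      have n1: "norm (integral {-r..r} (\<lambda>y. of_real (psi z y) * ef k2 y)) \<le> C * pi / s"
      proof (rule int_r_bound[OF pi s0])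
        fix y
        have "norm (of_real (psi z y) * ef k2 y) = \<bar>psi z y\<bar>" by (simp add: norm_mult)
        also have "\<dots> \<le> C / sqrt (1 + z^2 + y^2) ^ 2" by (rule bp)
        also have "\<dots> \<le> C / (s^2 + y^2)" by (rule b1[OF C s0 z])
        finally show "norm (of_real (psi z y) * ef k2 y) \<le> C / (s^2 + y^2)" .
      qed
      have p0: "\<bar>px 0 z t\<bar> \<le> C / s" for t
      proof -
        have "\<bar>px 0 z t\<bar> \<le> C / sqrt (1 + z^2 + t^2) ^ 1" using bx[of 0 z t] by simp
        also have "\<dots> \<le> C / \<bar>z\<bar>" by (rule b0[OF C]) (use z s0 in auto)
        finally show ?thesis using z by simp
      qed
      have n2: "norm (of_real (px 0 z r) * ef k2 r - of_real (px 0 z (-r)) * ef k2 (-r)) \<le> 2 * C / s"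
      proof -
        have "norm (of_real (px 0 z r) * ef k2 r - of_real (px 0 z (-r)) * ef k2 (-r))
           \<le> norm (of_real (px 0 z r) * ef k2 r) + norm (of_real (px 0 z (-r)) * ef k2 (-r))"
          by (rule norm_triangle_ineq4)
        also have "\<dots> = \<bar>px 0 z r\<bar> + \<bar>px 0 z (-r)\<bar>" by (simp add: norm_mult)
        also have "\<dots> \<le> C / s + C / s" by (intro add_mono p0)
        finally show ?thesis by simp
      qed
      have "norm (integral {-r..r} (\<lambda>y. of_real (px 0 z y) * ef k2 y)) \<le> norm (cc k2) *
         (norm (integral {-r..r} (\<lambda>y. of_real (psi z y) * ef k2 y))
          + norm (of_real (px 0 z r) * ef k2 r - of_real (px 0 z (-r)) * ef k2 (-r)))"
        unfolding e norm_mult by (intro mult_left_mono norm_triangle_ineq4) simp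
      also have "\<dots> \<le> norm (cc k2) * (C * pi / s + 2 * C / s)"
        by (intro mult_left_mono add_mono n1 n2) simp
      finally show ?thesis .
    qed
    have Qeq: "integral {-r..r} Q = ef k1 s * integral {-r..r} (\<lambda>y. of_real (px 0 s y) * ef k2 y)
        - ef k1 (-s) * integral {-r..r} (\<lambda>y. of_real (px 0 (-s) y) * ef k2 y)"
    proof -
      have ip: "(\<lambda>y. of_real (px 0 z y) * ef k2 y) integrable_on {-r..r}" for z
        by (intro integrable_continuous_interval continuous_intros continuous_on_subset[OF cont_y[OF cx]] ef_cont) auto
      have "Q = (\<lambda>y. ef k1 s * (of_real (px 0 s y) * ef k2 y) - ef k1 (-s) * (of_real (px 0 (-s) y) * ef k2 y))"
        unfolding Q_def bt_def by (rule ext) (simp add: algebra_simps)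
      then have "integral {-r..r} Q = integral {-r..r} (\<lambda>y. ef k1 s * (of_real (px 0 s y) * ef k2 y))
         - integral {-r..r} (\<lambda>y. ef k1 (-s) * (of_real (px 0 (-s) y) * ef k2 y))"
        by (simp only: integral_diff[OF integrable_on_mult_right[OF ip] integrable_on_mult_right[OF ip]])
      then show ?thesis by simp
    qed
    have nQ: "norm (integral {-r..r} Q) \<le> 2 * (norm (cc k2) * (C * pi / s + 2 * C / s))"
    proof -
      have "norm (integral {-r..r} Q) \<le> norm (ef k1 s * integral {-r..r} (\<lambda>y. of_real (px 0 s y) * ef k2 y))
          + norm (ef k1 (-s) * integral {-r..r} (\<lambda>y. of_real (px 0 (-s) y) * ef k2 y))"
        unfolding Qeq by (rule norm_triangle_ineq4)
      also have "\<dots> \<le> norm (cc k2) * (C * pi / s + 2 * C / s) + norm (cc k2) * (C * pi / s + 2 * C / s)"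
        unfolding norm_mult norm_ef by (intro add_mono) (use sig[of s] sig[of "-s"] s0 in auto)
      finally show ?thesis by simp
    qed
    have "norm (integral {-r..r} P - cc k1 * integral {-r..r} Q) \<le> norm (integral {-r..r} P) + norm (cc k1) * norm (integral {-r..r} Q)"
      by (metis norm_triangle_ineq4 norm_mult)
    also have "\<dots> \<le> M1 * pi / s + norm (cc k1) * (2 * (norm (cc k2) * (C * pi / s + 2 * C / s)))"
      by (intro add_mono nP mult_left_mono nQ) simp
    also have "\<dots> = K0 / s" unfolding K0_def M1_def using s0 by (simp add: field_simps)
    finally show ?thesis unfolding I_eq .
  qed
  have Alim: "((\<lambda>r. integral {-r..r} (\<lambda>y. A y * ef k2 y)) \<longlongrightarrow> L) at_top"
    unfolding L_def by (rule lim_univ[OF AI])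
  have K0: "0 \<le> K0" unfolding K0_def using C by (intro add_nonneg_nonneg mult_nonneg_nonneg) auto
  have "((\<lambda>(r,s). integral {-r..r} (\<lambda>y. integral {-s..s} (\<lambda>x. of_real (px 0 x y) * ef k1 x * ef k2 y))) \<longlongrightarrow> L)
     (at_top \<times>\<^sub>F at_top)"
  proof (rule tendstoI)
    fix e :: real assume e: "0 < e"
    have ev1: "\<forall>\<^sub>F r in at_top. dist (integral {-r..r} (\<lambda>y. A y * ef k2 y)) L < e/2 \<and> 0 \<le> r"
      using tendstoD[OF Alim, of "e/2"] eventually_ge_at_top[of 0] e by (auto intro: eventually_conj)
    have ev2: "\<forall>\<^sub>F s in at_top. K0 / s < e/2 \<and> 1 \<le> s"
      using eventually_ge_at_top[of "max 1 (4 * K0 / e)"]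
    proof eventually_elim
      case (elim s)
      then have s1: "1 \<le> s" and s2: "4 * K0 / e \<le> s" by auto
      have "4 * K0 \<le> e * s" using s2 e by (simp add: pos_divide_le_eq mult.commute)
      then have "2 * K0 < e * s" using K0 e s1 by (cases "K0 = 0") auto
      then have "K0 / s < e / 2" using s1 by (simp add: divide_less_eq field_simps)
      then show ?case using s1 by simp
    qed
    show "\<forall>\<^sub>F rs in at_top \<times>\<^sub>F at_top.
      dist ((\<lambda>(r,s). integral {-r..r} (\<lambda>y. integral {-s..s} (\<lambda>x. of_real (px 0 x y) * ef k1 x * ef k2 y))) rs) L < e"
      using eventually_prodI[OF ev1 ev2]
    proof (rule eventually_mono)
      fix rs :: "real \<times> real"
      assume a: "(dist (integral {-fst rs..fst rs} (\<lambda>y. A y * ef k2 y)) L < e/2 \<and> 0 \<le> fst rs) \<and>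
          (K0 / snd rs < e/2 \<and> 1 \<le> snd rs)"
      obtain r s where rs: "rs = (r, s)" by (cases rs)
      have m: "norm (integral {-r..r} (\<lambda>y. integral {-s..s} (\<lambda>x. of_real (px 0 x y) * ef k1 x * ef k2 y))
          - integral {-r..r} (\<lambda>y. A y * ef k2 y)) \<le> K0 / s" using main a rs by simp
      have "dist (integral {-r..r} (\<lambda>y. integral {-s..s} (\<lambda>x. of_real (px 0 x y) * ef k1 x * ef k2 y))) L
         \<le> dist (integral {-r..r} (\<lambda>y. integral {-s..s} (\<lambda>x. of_real (px 0 x y) * ef k1 x * ef k2 y)))
              (integral {-r..r} (\<lambda>y. A y * ef k2 y)) + dist (integral {-r..r} (\<lambda>y. A y * ef k2 y)) L"
        by (rule dist_triangle)
      also have "\<dots> < e"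
      proof -
        have "dist (integral {-r..r} (\<lambda>y. integral {-s..s} (\<lambda>x. of_real (px 0 x y) * ef k1 x * ef k2 y)))
              (integral {-r..r} (\<lambda>y. A y * ef k2 y)) \<le> K0 / s" using m by (simp only: dist_norm)
        moreover have "dist (integral {-r..r} (\<lambda>y. A y * ef k2 y)) L < e/2" "K0 / s < e/2" using a rs by auto
        ultimately show ?thesis by linarith
      qed
      finally show "dist ((\<lambda>(r,s). integral {-r..r} (\<lambda>y. integral {-s..s} (\<lambda>x. of_real (px 0 x y) * ef k1 x * ef k2 y))) rs) L < e"
        using rs by simp
    qed
  qed
  then show ?thesis unfolding L_def A_def G_def .
  qed
qed



lemma tendsto_swap_prod:
  assumes "((\<lambda>(r,s). g s r) \<longlongrightarrow> L) (F \<times>\<^sub>F F)"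
  shows "((\<lambda>(r,s). g r s) \<longlongrightarrow> L) (F \<times>\<^sub>F F)"
proof -
  have "((\<lambda>(r,s). g r s) \<longlongrightarrow> L) (filtermap prod.swap (F \<times>\<^sub>F F))"
    unfolding filterlim_filtermap using assms by (simp add: case_prod_unfold o_def)
  then show ?thesis by (simp flip: prod_filter_commute)
qed

lemma sq_comm: "sqrt (1 + b^2 + a^2) = sqrt (1 + a^2 + (b::real)^2)"
  by (simp add: add.commute add.left_commute)

lemma lem2both:
  fixes P Q :: "nat \<Rightarrow> real \<Rightarrow> real \<Rightarrow> real"
  assumes P0: "\<And>a b. Q 0 a b = P 0 a b"
    and dP: "\<And>i a b. i < 3 \<Longrightarrow> ((\<lambda>t. P i t b) has_real_derivative P (Suc i) a b) (at a)"
    and dQ: "\<And>i a b. i < 3 \<Longrightarrow> ((\<lambda>t. Q i a t) has_real_derivative Q (Suc i) a b) (at b)"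
    and cP: "\<And>i. i \<le> 3 \<Longrightarrow> continuous_on UNIV (\<lambda>(a,b). P i a b)"
    and cQ: "\<And>i. i \<le> 3 \<Longrightarrow> continuous_on UNIV (\<lambda>(a,b). Q i a b)"
    and bP: "\<And>i a b. i \<le> 3 \<Longrightarrow> \<bar>P i a b\<bar> \<le> C / sqrt (1 + a^2 + b^2) ^ Suc i"
    and bQ: "\<And>i a b. i \<le> 3 \<Longrightarrow> \<bar>Q i a b\<bar> \<le> C / sqrt (1 + a^2 + b^2) ^ Suc i"
    and k1: "k1 \<noteq> 0" and k2: "k2 \<noteq> 0"
  shows "\<exists>L. ((\<lambda>(r,s). integral {-r..r} (\<lambda>b. integral {-s..s} (\<lambda>a. of_real (P 0 a b) * ef k1 a * ef k2 b))) \<longlongrightarrow> L)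
           (at_top \<times>\<^sub>F at_top) \<and>
         ((\<lambda>b. Lim at_top (\<lambda>s. integral {-s..s} (\<lambda>a. of_real (P 0 a b) * ef k1 a)) * ef k2 b) has_integral L) UNIV \<and>
         ((\<lambda>a. Lim at_top (\<lambda>r. integral {-r..r} (\<lambda>b. of_real (P 0 a b) * ef k2 b)) * ef k1 a) has_integral L) UNIV"
proof -
  have dy: "((\<lambda>t. P 0 a t) has_real_derivative Q 1 a b) (at b)" for a b
    using dQ[where i=0 and a=a and b=b] by (simp add: P0)
  have bp: "\<bar>Q 1 a b\<bar> \<le> C / sqrt (1 + a^2 + b^2) ^ 2" for a b using bQ[of 1 a b] by (simp add: numeral_eq_Suc)
  have cQ1: "continuous_on UNIV (\<lambda>(a,b). Q 1 a b)" by (rule cQ) simp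
  note X = lem2[of P "Q 1" C k1 k2, OF dP dy cP cQ1 bP bp k1 k2]
  define L where "L = integral UNIV (\<lambda>y. cc k1 ^ 3 * integral UNIV (\<lambda>x. of_real (P 3 x y) * ef k1 x) * ef k2 y)"
  have dx': "((\<lambda>t. Q i a t) has_real_derivative Q (Suc i) a b) (at b)" if "i < 3" for i b a
    using dQ[OF that] .
  have dy': "((\<lambda>t. Q 0 t b) has_real_derivative P 1 a b) (at a)" for b a
    using dP[where i=0 and a=a and b=b] by (simp add: P0)
  have cQ': "continuous_on UNIV (\<lambda>(b,a). Q i a b)" if "i \<le> 3" for i
    using continuous_on_swap_args[OF cQ[OF that, unfolded UNIV_Times_UNIV[symmetric]]] by simp
  have cP': "continuous_on UNIV (\<lambda>(b,a). P 1 a b)"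
    using continuous_on_swap_args[OF cP[of 1, unfolded UNIV_Times_UNIV[symmetric]]] by simp
  have bQ': "\<bar>Q i a b\<bar> \<le> C / sqrt (1 + b^2 + a^2) ^ Suc i" if "i \<le> 3" for i b a
    using bQ[OF that, of a b] by (simp only: sq_comm)
  have bp': "\<bar>P 1 a b\<bar> \<le> C / sqrt (1 + b^2 + a^2) ^ 2" for b a
  proof -
    have "\<bar>P 1 a b\<bar> \<le> C / sqrt (1 + a^2 + b^2) ^ 2" using bP[where i=1 and a=a and b=b] by (simp add: numeral_eq_Suc)
    then show ?thesis by (simp only: sq_comm)
  qed
  note Y = lem2[of "\<lambda>i b a. Q i a b" "\<lambda>b a. P 1 a b" C k2 k1, OF dx' dy' cQ' cP' bQ' bp' k2 k1]
  define L' where "L' = integral UNIV (\<lambda>x. cc k2 ^ 3 * integral UNIV (\<lambda>y. of_real (Q 3 x y) * ef k2 y) * ef k1 x)"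
  have lim1: "((\<lambda>(r,s). integral {-r..r} (\<lambda>b. integral {-s..s} (\<lambda>a. of_real (P 0 a b) * ef k1 a * ef k2 b))) \<longlongrightarrow> L)
           (at_top \<times>\<^sub>F at_top)" using X(3) unfolding L_def .
  have lim2: "((\<lambda>(r,s). integral {-r..r} (\<lambda>a. integral {-s..s} (\<lambda>b. of_real (P 0 a b) * ef k2 b * ef k1 a))) \<longlongrightarrow> L')
           (at_top \<times>\<^sub>F at_top)" using Y(3) unfolding L'_def P0 .
  have sw: "integral {-r..r} (\<lambda>a. integral {-s..s} (\<lambda>b. of_real (P 0 a b) * ef k2 b * ef k1 a)) =
            integral {-s..s} (\<lambda>b. integral {-r..r} (\<lambda>a. of_real (P 0 a b) * ef k1 a * ef k2 b))" for r s
  proof -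
    have c: "continuous_on (cbox (-r, -s) (r, s)) (\<lambda>(a, b). of_real (P 0 a b) * ef k2 b * ef k1 a)"
      unfolding case_prod_unfold
      by (intro continuous_intros continuous_on_compose2[OF ef_cont[of UNIV]]
          continuous_on_subset[OF cP[of 0, unfolded case_prod_unfold]]) auto
    have "integral {-r..r} (\<lambda>a. integral {-s..s} (\<lambda>b. of_real (P 0 a b) * ef k2 b * ef k1 a)) =
      integral {-s..s} (\<lambda>b. integral {-r..r} (\<lambda>a. of_real (P 0 a b) * ef k2 b * ef k1 a))"
      using integral_swap_continuous[OF c] by simp
    then show ?thesis by (simp add: mult.commute mult.left_commute)
  qed
  have lim2': "((\<lambda>(r,s). integral {-r..r} (\<lambda>b. integral {-s..s} (\<lambda>a. of_real (P 0 a b) * ef k1 a * ef k2 b))) \<longlongrightarrow> L')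
           (at_top \<times>\<^sub>F at_top)"
    using lim2 unfolding sw by (rule tendsto_swap_prod[where g = "\<lambda>r s. integral {-r..r} (\<lambda>b. integral {-s..s} (\<lambda>a. of_real (P 0 a b) * ef k1 a * ef k2 b))"])
  have LL: "L' = L"
    by (rule tendsto_unique[OF _ lim2' lim1]) (simp add: prod_filter_eq_bot)
  have A1: "Lim at_top (\<lambda>s. integral {-s..s} (\<lambda>a. of_real (P 0 a b) * ef k1 a)) =
      cc k1 ^ 3 * integral UNIV (\<lambda>x. of_real (P 3 x b) * ef k1 x)" for b
    by (rule tendsto_Lim[OF _ X(1)]) simp
  have A2: "Lim at_top (\<lambda>r. integral {-r..r} (\<lambda>b. of_real (P 0 a b) * ef k2 b)) =
      cc k2 ^ 3 * integral UNIV (\<lambda>y. of_real (Q 3 a y) * ef k2 y)" for a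
    using tendsto_Lim[OF _ Y(1)[of a]] by (simp add: P0)
  show ?thesis
  proof (intro exI conjI)
    show "((\<lambda>(r,s). integral {-r..r} (\<lambda>b. integral {-s..s} (\<lambda>a. of_real (P 0 a b) * ef k1 a * ef k2 b))) \<longlongrightarrow> L)
           (at_top \<times>\<^sub>F at_top)" by (rule lim1)
    show "((\<lambda>b. Lim at_top (\<lambda>s. integral {-s..s} (\<lambda>a. of_real (P 0 a b) * ef k1 a)) * ef k2 b) has_integral L) UNIV"
      unfolding A1 L_def by (rule X(2))
    show "((\<lambda>a. Lim at_top (\<lambda>r. integral {-r..r} (\<lambda>b. of_real (P 0 a b) * ef k2 b)) * ef k1 a) has_integral L) UNIV"
      unfolding A2 LL[symmetric] L'_def by (rule Y(2))
  qed
qed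



lemma sm_dx: "smooth3 f \<Longrightarrow> ((\<lambda>t. pd3 ds f t y z) has_real_derivative pd3 (CX # ds) f x y z) (at x)"
  unfolding smooth3_def by (simp add: pdx_def DERIV_deriv_iff_real_differentiable)
lemma sm_dy: "smooth3 f \<Longrightarrow> ((\<lambda>t. pd3 ds f x t z) has_real_derivative pd3 (CY # ds) f x y z) (at y)"
  unfolding smooth3_def by (simp add: pdy_def DERIV_deriv_iff_real_differentiable)
lemma sm_dz: "smooth3 f \<Longrightarrow> ((\<lambda>t. pd3 ds f x y t) has_real_derivative pd3 (CZ # ds) f x y z) (at z)"
  unfolding smooth3_def by (simp add: pdz_def DERIV_deriv_iff_real_differentiable)

lemma pdX: "smooth3 f \<Longrightarrow> ((\<lambda>t. pd3ijk i 0 0 f t y z) has_real_derivative pd3ijk (Suc i) 0 0 f x y z) (at x)"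
  unfolding pd3ijk_def using sm_dx[where f=f and ds="replicate i CX" and x=x and y=y and z=z] by simp
lemma pdY: "smooth3 f \<Longrightarrow> ((\<lambda>t. pd3ijk 0 i 0 f x t z) has_real_derivative pd3ijk 0 (Suc i) 0 f x y z) (at y)"
  unfolding pd3ijk_def using sm_dy[where f=f and ds="replicate i CY" and x=x and y=y and z=z] by simp
lemma pdZ: "smooth3 f \<Longrightarrow> ((\<lambda>t. pd3ijk 0 0 i f x y t) has_real_derivative pd3ijk 0 0 (Suc i) f x y z) (at z)"
  unfolding pd3ijk_def using sm_dz[where f=f and ds="replicate i CZ" and x=x and y=y and z=z] by simp

lemma pd000[simp]: "pd3ijk 0 0 0 f = f" by (simp add: pd3ijk_def)

lemma sm_cont: "smooth3 f \<Longrightarrow> continuous_on UNIV (\<lambda>(x,y,z). pd3ijk i j k f x y z)"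
  unfolding smooth3_def pd3ijk_def by blast

lemma c3_comp:
  fixes D :: "real \<Rightarrow> real \<Rightarrow> real \<Rightarrow> real"
  assumes "continuous_on UNIV (\<lambda>(x,y,z). D x y z)" "continuous_on UNIV m"
  shows "continuous_on UNIV (\<lambda>p. (\<lambda>(x,y,z). D x y z) (m p))"
  by (rule continuous_on_compose2[OF assms(1) assms(2)]) auto

lemma c_xy: fixes D :: "real \<Rightarrow> real \<Rightarrow> real \<Rightarrow> real" shows "continuous_on UNIV (\<lambda>(x,y,z). D x y z) \<Longrightarrow> continuous_on UNIV (\<lambda>(a,b). D a b (z::real))"
  using c3_comp[of D "\<lambda>p. (fst p, snd p, z)"] by (simp add: case_prod_unfold continuous_intros)
lemma c_xz: fixes D :: "real \<Rightarrow> real \<Rightarrow> real \<Rightarrow> real" shows "continuous_on UNIV (\<lambda>(x,y,z). D x y z) \<Longrightarrow> continuous_on UNIV (\<lambda>(a,b). D a (y::real) b)"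
  using c3_comp[of D "\<lambda>p. (fst p, y, snd p)"] by (simp add: case_prod_unfold continuous_intros)
lemma c_yz: fixes D :: "real \<Rightarrow> real \<Rightarrow> real \<Rightarrow> real" shows "continuous_on UNIV (\<lambda>(x,y,z). D x y z) \<Longrightarrow> continuous_on UNIV (\<lambda>(a,b). D (x::real) a b)"
  using c3_comp[of D "\<lambda>p. (x, fst p, snd p)"] by (simp add: case_prod_unfold continuous_intros)
lemma c_x: fixes D :: "real \<Rightarrow> real \<Rightarrow> real \<Rightarrow> real" shows "continuous_on UNIV (\<lambda>(x,y,z). D x y z) \<Longrightarrow> continuous_on UNIV (\<lambda>a. D a (y::real) (z::real))"
  using c3_comp[of D "\<lambda>p. (p, y, z)"] by (simp add: case_prod_unfold continuous_intros)
lemma c_y: fixes D :: "real \<Rightarrow> real \<Rightarrow> real \<Rightarrow> real" shows "continuous_on UNIV (\<lambda>(x,y,z). D x y z) \<Longrightarrow> continuous_on UNIV (\<lambda>a. D (x::real) a (z::real))"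
  using c3_comp[of D "\<lambda>p. (x, p, z)"] by (simp add: case_prod_unfold continuous_intros)
lemma c_z: fixes D :: "real \<Rightarrow> real \<Rightarrow> real \<Rightarrow> real" shows "continuous_on UNIV (\<lambda>(x,y,z). D x y z) \<Longrightarrow> continuous_on UNIV (\<lambda>a. D (x::real) (y::real) a)"
  using c3_comp[of D "\<lambda>p. (x, y, p)"] by (simp add: case_prod_unfold continuous_intros)

lemma norm3: "norm (x, y, z) = sqrt (x^2 + y^2 + (z::real)^2)"
  by (simp add: norm_Pair add.assoc)

lemma ub3:
  fixes D :: "real \<Rightarrow> real \<Rightarrow> real \<Rightarrow> real"
  assumes c: "continuous_on UNIV (\<lambda>(x,y,z). D x y z)" and m: "mod_dec3 n D"
  shows "\<exists>C\<ge>0. \<forall>x y z. \<bar>D x y z\<bar> \<le> C / sqrt (1 + x^2 + y^2 + z^2) ^ n"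
proof -
  obtain C0 where C0: "\<And>x y z. norm (x,y,z) > 1 \<Longrightarrow> \<bar>D x y z\<bar> \<le> C0 / norm (x,y,z) ^ n"
    using m unfolding mod_dec3_def by blast
  obtain M where M: "M \<ge> 0" "\<And>p. p \<in> cball 0 1 \<Longrightarrow> norm ((\<lambda>(x,y,z). D x y z) p) \<le> M"
    using continuous_on_compact_bound[OF compact_cball continuous_on_subset[OF c]] by blast
  define B where "B = (\<bar>C0\<bar> + M) * 2 ^ n"
  have B: "B \<ge> 0" unfolding B_def using M by simp
  have "\<bar>D x y z\<bar> \<le> B / sqrt (1 + x^2 + y^2 + z^2) ^ n" for x y z
  proof -
    define N where "N = norm (x,y,z)"
    define q where "q = sqrt (1 + x^2 + y^2 + z^2)"
    have N2: "N^2 = x^2 + y^2 + z^2" unfolding N_def norm3 by (simp add: add_nonneg_nonneg)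
    have q2: "q^2 = 1 + N^2" unfolding q_def N2 by (simp add: add_nonneg_nonneg add.assoc)
    have q0: "q > 0" unfolding q_def by (simp add: add_pos_nonneg)
    have N0: "N \<ge> 0" unfolding N_def by simp
    have "\<bar>D x y z\<bar> * q ^ n \<le> B"
    proof (cases "N > 1")
      case True
      have "q^2 \<le> (2 * N)^2" using q2 True less_1_mult[OF True True] by (simp add: power2_eq_square)
      then have "q \<le> 2 * N" by (rule power2_le_imp_le) (use N0 in simp)
      then have qn: "q ^ n \<le> (2 * N) ^ n" using q0 by (intro power_mono) auto
      have d: "\<bar>D x y z\<bar> \<le> \<bar>C0\<bar> / N ^ n"
        using C0[of x y z] True unfolding N_def by (smt (verit) divide_right_mono zero_le_power norm_ge_zero)
      have "\<bar>D x y z\<bar> * q ^ n \<le> (\<bar>C0\<bar> / N ^ n) * (2 * N) ^ n"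
        using d qn q0 by (intro mult_mono) auto
      also have "\<dots> = \<bar>C0\<bar> * 2 ^ n" using True by (simp add: power_mult_distrib)
      also have "\<dots> \<le> B" unfolding B_def using M by (intro mult_right_mono) auto
      finally show ?thesis .
    next
      case False
      have "q^2 \<le> 2^2" using q2 False N0 by (simp add: power2_eq_square) (smt (verit) mult_le_one)
      then have "q \<le> 2" by (rule power2_le_imp_le) simp
      then have qn: "q ^ n \<le> 2 ^ n" using q0 by (intro power_mono) auto
      have "(x,y,z) \<in> cball 0 1" unfolding mem_cball_0 using False unfolding N_def by simp
      then have d: "\<bar>D x y z\<bar> \<le> M" using M(2)[of "(x,y,z)"] by simp
      have "\<bar>D x y z\<bar> * q ^ n \<le> M * 2 ^ n" using d qn q0 M by (intro mult_mono) auto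
      also have "\<dots> \<le> B" unfolding B_def by (intro mult_right_mono) auto
      finally show ?thesis .
    qed
    then show ?thesis using q0 unfolding q_def[symmetric] by (simp add: pos_le_divide_eq)
  qed
  then show ?thesis using B by blast
qed



lemma sqmono:
  assumes C: "0 \<le> C" and AW: "A \<le> W" and A1: "1 \<le> A"
  shows "C / sqrt W ^ n \<le> C / sqrt A ^ n"
proof (rule b_gen[OF C])
  show "0 < sqrt A ^ n" using A1 by simp
  show "sqrt A ^ n \<le> sqrt W ^ n" using AW A1 by (intro power_mono real_sqrt_le_mono) auto
qed

lemma b0w:
  assumes C: "0 \<le> C" and n: "1 \<le> n" and x: "x \<noteq> 0" and w: "0 \<le> w"
  shows "C / sqrt (1 + x^2 + w) ^ n \<le> C / \<bar>x::real\<bar>"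
proof -
  have q1: "1 \<le> sqrt (1 + x^2 + w)" using w by simp
  have "\<bar>x\<bar> = sqrt (x^2)" by simp
  also have "\<dots> \<le> sqrt (1 + x^2 + w)" using w by (intro real_sqrt_le_mono) simp
  also have "\<dots> \<le> sqrt (1 + x^2 + w) ^ n" using q1 n by (metis power_increasing power_one_right)
  finally show ?thesis using x by (intro b_gen[OF C]) auto
qed

lemma abound:
  fixes g :: "real \<Rightarrow> real"
  assumes c: "continuous_on UNIV g" and C: "0 \<le> C" and w: "0 \<le> w"
    and b: "\<And>x. \<bar>g x\<bar> \<le> C / sqrt (1 + x^2 + w) ^ 4"
  shows "(\<lambda>x. of_real (g x) * ef k x) integrable_on UNIV"
    and "norm (integral UNIV (\<lambda>x. of_real (g x) * ef k x)) \<le> C * pi / sqrt (1 + w) ^ 3"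
proof -
  define a where "a = sqrt (1 + w)"
  have a0: "a > 0" unfolding a_def using w by simp
  have a2: "a^2 = 1 + w" unfolding a_def using w by simp
  have cc: "continuous_on UNIV (\<lambda>x. of_real (g x) * ef k x)" by (intro continuous_intros c ef_cont)
  have bb: "norm (of_real (g x) * ef k x) \<le> (C / (1 + w)) / (a^2 + x^2)" for x
  proof -
    have "norm (of_real (g x) * ef k x) = \<bar>g x\<bar>" by (simp add: norm_mult)
    also have "\<dots> \<le> C / sqrt (1 + x^2 + w) ^ 4" by (rule b)
    also have "sqrt (1 + x^2 + w) ^ 4 = (1 + x^2 + w)^2"
    proof -
      have "sqrt (1 + x^2 + w) ^ 4 = (sqrt (1 + x^2 + w) ^ 2)^2"
        using power_mult[of "sqrt (1 + x^2 + w)" 2 2] by simp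
      then show ?thesis using w by simp
    qed
    also have "C / (1 + x^2 + w)^2 \<le> C / ((1 + w) * (a^2 + x^2))"
    proof (rule b_gen[OF C])
      show "0 < (1 + w) * (a^2 + x^2)" using w a2 by (simp add: add_pos_nonneg)
      have "(1 + w) * (1 + w + x^2) \<le> (1 + x^2 + w) * (1 + x^2 + w)"
        using w by (intro mult_mono) auto
      then show "(1 + w) * (a^2 + x^2) \<le> (1 + x^2 + w)^2"
        unfolding a2 by (simp add: power2_eq_square)
    qed
    also have "\<dots> = (C / (1 + w)) / (a^2 + x^2)" by simp
    finally show ?thesis .
  qed
  show "(\<lambda>x. of_real (g x) * ef k x) integrable_on UNIV" by (rule int_bound(1)[OF cc a0 bb])
  have "norm (integral UNIV (\<lambda>x. of_real (g x) * ef k x)) \<le> (C / (1 + w)) * pi / a" by (rule int_bound(2)[OF cc a0 bb])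
  also have "\<dots> = C * pi / a ^ 3" using a2 a0 by (simp add: power3_eq_cube power2_eq_square field_simps)
  finally show "norm (integral UNIV (\<lambda>x. of_real (g x) * ef k x)) \<le> C * pi / sqrt (1 + w) ^ 3"
    unfolding a_def .
qed

lemma fbound:
  fixes h :: "real \<Rightarrow> complex"
  assumes hi: "(h has_integral I) UNIV" and K: "0 \<le> K" and w: "0 \<le> w"
    and b: "\<And>y. norm (h y) \<le> K / sqrt (1 + y^2 + w) ^ 3"
  shows "norm I \<le> K * pi / (1 + w)"
proof -
  define a where "a = sqrt (1 + w)"
  have a0: "a > 0" unfolding a_def using w by simp
  have a2: "a^2 = 1 + w" unfolding a_def using w by simp
  have gi: "((\<lambda>y. (K / a) * (1 / (a^2 + y^2))) has_integral (K / a) * (pi / a)) UNIV"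
    by (rule has_integral_mult_right[OF arct_int[OF a0]])
  have bb: "norm (h y) \<le> (K / a) * (1 / (a^2 + y^2))" for y
  proof -
    have "norm (h y) \<le> K / sqrt (1 + y^2 + w) ^ 3" by (rule b)
    also have "\<dots> \<le> K / ((a^2 + y^2) * a)"
    proof (rule b_gen[OF K])
      show "0 < (a^2 + y^2) * a" using a0 by (simp add: add_pos_nonneg)
      have "a \<le> sqrt (1 + y^2 + w)" unfolding a_def by (intro real_sqrt_le_mono) simp
      moreover have "sqrt (1 + y^2 + w) ^ 3 = (1 + y^2 + w) * sqrt (1 + y^2 + w)"
      proof -
        have "sqrt (1 + y^2 + w) ^ 3 = sqrt (1 + y^2 + w) ^ 2 * sqrt (1 + y^2 + w)"
          by (simp add: power3_eq_cube power2_eq_square)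
        then show ?thesis using w by simp
      qed
      moreover have "0 \<le> 1 + y^2 + w" using w by (simp add: add_nonneg_nonneg)
      ultimately show "(a^2 + y^2) * a \<le> sqrt (1 + y^2 + w) ^ 3"
        using a2 a0 by (auto intro!: mult_mono)
    qed
    also have "\<dots> = (K / a) * (1 / (a^2 + y^2))" by simp
    finally show ?thesis .
  qed
  have "norm I = norm (integral UNIV h)" using hi by (simp add: integral_unique)
  also have "\<dots> \<le> integral UNIV (\<lambda>y. (K / a) * (1 / (a^2 + y^2)))"
    by (rule integral_norm_bound_integral[OF has_integral_integrable[OF hi] has_integral_integrable[OF gi]])
       (use bb in auto)
  also have "\<dots> = (K / a) * (pi / a)" using gi by (simp add: integral_unique)
  also have "\<dots> = K * pi / (1 + w)" using a2 a0 by (simp add: power2_eq_square field_simps)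
  finally show ?thesis .
qed

lemma md2:
  assumes K: "0 \<le> K" and b: "\<And>u v. norm (h u v) \<le> K / sqrt (1 + (u^2 + v^2)) ^ 3"
  shows "mod_dec2 {} 3 h"
  unfolding mod_dec2_def
proof (intro exI allI impI)
  fix u v :: real assume "(u, v) \<notin> {} \<and> 1 < norm (u, v)"
  then have n1: "1 < norm (u, v)" by simp
  have "norm (h u v) \<le> K / sqrt (1 + (u^2 + v^2)) ^ 3" by (rule b)
  also have "\<dots> \<le> K / norm (u, v) ^ 3"
  proof (rule b_gen[OF K])
    show "0 < norm (u, v) ^ 3" by (rule zero_less_power) (use n1 in linarith)
    show "norm (u, v) ^ 3 \<le> sqrt (1 + (u^2 + v^2)) ^ 3"
      unfolding norm_Pair by (intro power_mono real_sqrt_le_mono) auto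
  qed
  finally show "norm (h u v) \<le> K / norm (u, v) ^ 3" .
qed

lemma md1:
  assumes K: "0 \<le> K" and b: "\<And>t. norm (F t) \<le> K / (1 + t^2)"
  shows "mod_dec1 F"
  unfolding mod_dec1_def
proof (intro exI allI impI)
  fix t :: real assume t: "1 < \<bar>t\<bar>"
  have "norm (F t) \<le> K / (1 + t^2)" by (rule b)
  also have "\<dots> \<le> K / t^2" by (rule b_gen[OF K]) (use t in auto)
  finally show "norm (F t) \<le> K / t^2" .
qed



lemma dir1:
  fixes g :: "nat \<Rightarrow> real \<Rightarrow> real"
  assumes d: "\<And>i x. i < 3 \<Longrightarrow> (g i has_real_derivative g (Suc i) x) (at x)"
    and c3: "continuous_on UNIV (g 3)" and C: "0 \<le> C" and w: "0 \<le> w"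
    and b: "\<And>i x. i \<le> 3 \<Longrightarrow> \<bar>g i x\<bar> \<le> C / sqrt (1 + x^2 + w) ^ Suc i" and k: "k \<noteq> 0"
  shows "((\<lambda>s. integral {-s..s} (\<lambda>x. of_real (g 0 x) * ef k x)) \<longlongrightarrow>
           Lim at_top (\<lambda>s. integral {-s..s} (\<lambda>x. of_real (g 0 x) * ef k x))) at_top"
    and "norm (Lim at_top (\<lambda>s. integral {-s..s} (\<lambda>x. of_real (g 0 x) * ef k x)))
           \<le> norm (cc k)^3 * (C * pi) / sqrt (1 + w) ^ 3"
proof -
  have b3: "\<bar>g 3 x\<bar> \<le> C / sqrt (1 + x^2 + w) ^ 4" for x using b[of 3 x] by (simp add: numeral_eq_Suc)
  note AB = abound[where k = k, OF c3 C w b3]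
  have bd: "\<bar>g i x\<bar> \<le> C / \<bar>x\<bar>" if "i < 3" "1 \<le> \<bar>x\<bar>" for i x
    by (rule order_trans[OF b b0w[OF C _ _ w]]) (use that in auto)
  have L: "((\<lambda>s. integral {-s..s} (\<lambda>x. of_real (g 0 x) * ef k x)) \<longlongrightarrow>
      cc k ^ 3 * integral UNIV (\<lambda>x. of_real (g 3 x) * ef k x)) at_top"
    by (rule osc1_lim[OF d c3 bd AB(1) k])
  have LL: "Lim at_top (\<lambda>s. integral {-s..s} (\<lambda>x. of_real (g 0 x) * ef k x)) =
      cc k ^ 3 * integral UNIV (\<lambda>x. of_real (g 3 x) * ef k x)"
    by (rule tendsto_Lim[OF _ L]) simp
  show "((\<lambda>s. integral {-s..s} (\<lambda>x. of_real (g 0 x) * ef k x)) \<longlongrightarrow>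
           Lim at_top (\<lambda>s. integral {-s..s} (\<lambda>x. of_real (g 0 x) * ef k x))) at_top"
    unfolding LL by (rule L)
  have "norm (cc k ^ 3 * integral UNIV (\<lambda>x. of_real (g 3 x) * ef k x)) \<le> norm (cc k)^3 * (C * pi / sqrt (1 + w) ^ 3)"
    unfolding norm_mult norm_power by (intro mult_left_mono AB(2)) simp
  then show "norm (Lim at_top (\<lambda>s. integral {-s..s} (\<lambda>x. of_real (g 0 x) * ef k x)))
           \<le> norm (cc k)^3 * (C * pi) / sqrt (1 + w) ^ 3" unfolding LL by simp
qed

theorem lemma17:
  fixes f :: "real \<Rightarrow> real \<Rightarrow> real \<Rightarrow> real"
  assumes "quasi_normal3 f \<or> quasi_split_normal3 f"
  shows "\<exists>(A::real \<Rightarrow> real \<Rightarrow> real \<Rightarrow> complex) (B::real \<Rightarrow> real \<Rightarrow> real \<Rightarrow> complex)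
           (C::real \<Rightarrow> real \<Rightarrow> real \<Rightarrow> complex) (F::real \<Rightarrow> real \<Rightarrow> real \<Rightarrow> complex)
           (G::real \<Rightarrow> real \<Rightarrow> real \<Rightarrow> complex) (H::real \<Rightarrow> real \<Rightarrow> real \<Rightarrow> complex).
    \<comment> \<open>(a)\<close>
    (\<forall>k1 y z. k1 \<noteq> 0 \<longrightarrow>
       ((\<lambda>r. integral {-r..r} (\<lambda>x. complex_of_real (f x y z) * ef k1 x)) \<longlongrightarrow> A k1 y z) at_top) \<and>
    (\<forall>x k2 z. k2 \<noteq> 0 \<longrightarrow>
       ((\<lambda>r. integral {-r..r} (\<lambda>y. complex_of_real (f x y z) * ef k2 y)) \<longlongrightarrow> B x k2 z) at_top) \<and>
    (\<forall>x y k3. k3 \<noteq> 0 \<longrightarrow>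
       ((\<lambda>r. integral {-r..r} (\<lambda>z. complex_of_real (f x y z) * ef k3 z)) \<longlongrightarrow> C x y k3) at_top) \<and>
    (\<forall>k1. k1 \<noteq> 0 \<longrightarrow> mod_dec2 {} 3 (\<lambda>y z. A k1 y z)) \<and>
    (\<forall>k2. k2 \<noteq> 0 \<longrightarrow> mod_dec2 {} 3 (\<lambda>x z. B x k2 z)) \<and>
    (\<forall>k3. k3 \<noteq> 0 \<longrightarrow> mod_dec2 {} 3 (\<lambda>x y. C x y k3)) \<and>
    \<comment> \<open>(b)\<close>
    (\<forall>k1 k2 z. k1 \<noteq> 0 \<and> k2 \<noteq> 0 \<longrightarrow>
       ((\<lambda>(r,s). integral {-r..r} (\<lambda>y. integral {-s..s}
           (\<lambda>x. complex_of_real (f x y z) * ef k1 x * ef k2 y))) \<longlongrightarrow> F k1 k2 z) (at_top \<times>\<^sub>F at_top)) \<and>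
    (\<forall>k1 y k3. k1 \<noteq> 0 \<and> k3 \<noteq> 0 \<longrightarrow>
       ((\<lambda>(r,s). integral {-r..r} (\<lambda>z. integral {-s..s}
           (\<lambda>x. complex_of_real (f x y z) * ef k1 x * ef k3 z))) \<longlongrightarrow> G k1 y k3) (at_top \<times>\<^sub>F at_top)) \<and>
    (\<forall>x k2 k3. k2 \<noteq> 0 \<and> k3 \<noteq> 0 \<longrightarrow>
       ((\<lambda>(r,s). integral {-r..r} (\<lambda>z. integral {-s..s}
           (\<lambda>y. complex_of_real (f x y z) * ef k2 y * ef k3 z))) \<longlongrightarrow> H x k2 k3) (at_top \<times>\<^sub>F at_top)) \<and>
    (\<forall>k1 k2. k1 \<noteq> 0 \<and> k2 \<noteq> 0 \<longrightarrow> mod_dec1 (\<lambda>z. F k1 k2 z)) \<and>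
    (\<forall>k1 k3. k1 \<noteq> 0 \<and> k3 \<noteq> 0 \<longrightarrow> mod_dec1 (\<lambda>y. G k1 y k3)) \<and>
    (\<forall>k2 k3. k2 \<noteq> 0 \<and> k3 \<noteq> 0 \<longrightarrow> mod_dec1 (\<lambda>x. H x k2 k3)) \<and>
    \<comment> \<open>(c)\<close>
    (\<forall>k1 k2 z. k1 \<noteq> 0 \<and> k2 \<noteq> 0 \<longrightarrow>
       ((\<lambda>y. A k1 y z * ef k2 y) has_integral F k1 k2 z) UNIV \<and>
       ((\<lambda>x. B x k2 z * ef k1 x) has_integral F k1 k2 z) UNIV) \<and>
    (\<forall>k1 y k3. k1 \<noteq> 0 \<and> k3 \<noteq> 0 \<longrightarrow>
       ((\<lambda>z. A k1 y z * ef k3 z) has_integral G k1 y k3) UNIV \<and>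
       ((\<lambda>x. C x y k3 * ef k1 x) has_integral G k1 y k3) UNIV) \<and>
    (\<forall>x k2 k3. k2 \<noteq> 0 \<and> k3 \<noteq> 0 \<longrightarrow>
       ((\<lambda>z. B x k2 z * ef k3 z) has_integral H x k2 k3) UNIV \<and>
       ((\<lambda>y. C x y k3 * ef k2 y) has_integral H x k2 k3) UNIV)"
proof -
  from assms have sm: "smooth3 f" and dec: "decay3 f"
    by (auto simp: quasi_normal3_def quasi_split_normal3_def)
  have cont: "continuous_on UNIV (\<lambda>(x,y,z). pd3ijk i j k f x y z)" for i j k by (rule sm_cont[OF sm])
  have md: "mod_dec3 (i+j+k+1) (pd3ijk i j k f)" for i j k
  proof (cases "i + j + k \<ge> 1")
    case True
    then show ?thesis using dec unfolding decay3_def by blast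
  next
    case False
    then have "i = 0" "j = 0" "k = 0" by auto
    then show ?thesis using dec unfolding decay3_def by simp
  qed
  have "\<forall>t::nat\<times>nat\<times>nat. \<exists>C\<ge>0. \<forall>x y z. \<bar>pd3ijk (fst t) (fst (snd t)) (snd (snd t)) f x y z\<bar>
      \<le> C / sqrt (1 + x^2 + y^2 + z^2) ^ (fst t + fst (snd t) + snd (snd t) + 1)"
    using ub3[OF cont md] by blast
  then obtain Cf where Cf: "\<And>t. 0 \<le> Cf t" "\<And>t x y z. \<bar>pd3ijk (fst t) (fst (snd t)) (snd (snd t)) f x y z\<bar>
      \<le> Cf t / sqrt (1 + x^2 + y^2 + z^2) ^ (fst t + fst (snd t) + snd (snd t) + 1)"
    by metis
  define C where "C = (\<Sum>t\<in>{..3::nat}\<times>{..3::nat}\<times>{..3::nat}. Cf t)"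
  have C0: "0 \<le> C" unfolding C_def by (intro sum_nonneg Cf(1))
  have bnd: "\<bar>pd3ijk i j k f x y z\<bar> \<le> C / sqrt (1 + x^2 + y^2 + z^2) ^ (i+j+k+1)"
    if "i \<le> 3" "j \<le> 3" "k \<le> 3" for i j k x y z
  proof -
    have "Cf (i,j,k) \<le> C" unfolding C_def
      by (rule member_le_sum) (use that Cf(1) in auto)
    then have "Cf (i,j,k) / sqrt (1 + x^2 + y^2 + z^2) ^ (i+j+k+1) \<le> C / sqrt (1 + x^2 + y^2 + z^2) ^ (i+j+k+1)"
      by (rule divide_right_mono) simp
    then show ?thesis using Cf(2)[of "(i,j,k)" x y z] by simp
  qed
  define A where "A = (\<lambda>k1 y z. Lim at_top (\<lambda>r. integral {-r..r} (\<lambda>x. complex_of_real (f x y z) * ef k1 x)))"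
  define B where "B = (\<lambda>x k2 z. Lim at_top (\<lambda>r. integral {-r..r} (\<lambda>y. complex_of_real (f x y z) * ef k2 y)))"
  define Cc where "Cc = (\<lambda>x y k3. Lim at_top (\<lambda>r. integral {-r..r} (\<lambda>z. complex_of_real (f x y z) * ef k3 z)))"
  define F where "F = (\<lambda>k1 k2 z. Lim (at_top \<times>\<^sub>F at_top) (\<lambda>(r,s). integral {-r..r} (\<lambda>y. integral {-s..s}
           (\<lambda>x. complex_of_real (f x y z) * ef k1 x * ef k2 y))))"
  define G where "G = (\<lambda>k1 y k3. Lim (at_top \<times>\<^sub>F at_top) (\<lambda>(r,s). integral {-r..r} (\<lambda>z. integral {-s..s}
           (\<lambda>x. complex_of_real (f x y z) * ef k1 x * ef k3 z))))"
  define H where "H = (\<lambda>x k2 k3. Lim (at_top \<times>\<^sub>F at_top) (\<lambda>(r,s). integral {-r..r} (\<lambda>z. integral {-s..s}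
           (\<lambda>y. complex_of_real (f x y z) * ef k2 y * ef k3 z))))"
  have ntriv: "at_top \<times>\<^sub>F at_top \<noteq> (bot :: (real \<times> real) filter)" by (simp add: prod_filter_eq_bot)
  have Ax: "((\<lambda>r. integral {-r..r} (\<lambda>x. of_real (f x y z) * ef k1 x)) \<longlongrightarrow> A k1 y z) at_top \<and>
      norm (A k1 y z) \<le> norm (cc k1)^3 * (C * pi) / sqrt (1 + (y^2 + z^2)) ^ 3" if k1: "k1 \<noteq> 0" for k1 y z
  proof -
    have b: "\<bar>pd3ijk i 0 0 f x y z\<bar> \<le> C / sqrt (1 + x^2 + (y^2 + z^2)) ^ Suc i" if "i \<le> 3" for i x
      using bnd[of i 0 0 x y z] that by (simp add: add.assoc)
    note D = dir1[where g = "\<lambda>i x. pd3ijk i 0 0 f x y z" and C = C and w = "y^2 + z^2" and k = k1,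
        OF pdX[OF sm] c_x[OF cont] C0 _ b k1]
    show ?thesis using D unfolding A_def by simp
  qed
  have By: "((\<lambda>r. integral {-r..r} (\<lambda>y. of_real (f x y z) * ef k2 y)) \<longlongrightarrow> B x k2 z) at_top \<and>
      norm (B x k2 z) \<le> norm (cc k2)^3 * (C * pi) / sqrt (1 + (x^2 + z^2)) ^ 3" if k2: "k2 \<noteq> 0" for x k2 z
  proof -
    have b: "\<bar>pd3ijk 0 i 0 f x y z\<bar> \<le> C / sqrt (1 + y^2 + (x^2 + z^2)) ^ Suc i" if "i \<le> 3" for i y
    proof -
      have e: "1 + x^2 + y^2 + z^2 = 1 + y^2 + (x^2 + z^2)" by simp
      show ?thesis using bnd[of 0 i 0 x y z] that unfolding e by simp
    qed
    note D = dir1[where g = "\<lambda>i y. pd3ijk 0 i 0 f x y z" and C = C and w = "x^2 + z^2" and k = k2,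
        OF pdY[OF sm] c_y[OF cont] C0 _ b k2]
    show ?thesis using D unfolding B_def by simp
  qed
  have Cz: "((\<lambda>r. integral {-r..r} (\<lambda>z. of_real (f x y z) * ef k3 z)) \<longlongrightarrow> Cc x y k3) at_top \<and>
      norm (Cc x y k3) \<le> norm (cc k3)^3 * (C * pi) / sqrt (1 + (x^2 + y^2)) ^ 3" if k3: "k3 \<noteq> 0" for x y k3
  proof -
    have b: "\<bar>pd3ijk 0 0 i f x y z\<bar> \<le> C / sqrt (1 + z^2 + (x^2 + y^2)) ^ Suc i" if "i \<le> 3" for i z
    proof -
      have e: "1 + x^2 + y^2 + z^2 = 1 + z^2 + (x^2 + y^2)" by simp
      show ?thesis using bnd[of 0 0 i x y z] that unfolding e by simp
    qed
    note D = dir1[where g = "\<lambda>i z. pd3ijk 0 0 i f x y z" and C = C and w = "x^2 + y^2" and k = k3,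
        OF pdZ[OF sm] c_z[OF cont] C0 _ b k3]
    show ?thesis using D unfolding Cc_def by simp
  qed
  have Fp: "\<exists>L. ((\<lambda>(r,s). integral {-r..r} (\<lambda>y. integral {-s..s} (\<lambda>x. of_real (f x y z) * ef k1 x * ef k2 y))) \<longlongrightarrow> L)
           (at_top \<times>\<^sub>F at_top) \<and>
         ((\<lambda>y. A k1 y z * ef k2 y) has_integral L) UNIV \<and>
         ((\<lambda>x. B x k2 z * ef k1 x) has_integral L) UNIV" if k1: "k1 \<noteq> 0" and k2: "k2 \<noteq> 0" for k1 k2 z
  proof -
    have bP: "\<bar>pd3ijk i 0 0 f a b z\<bar> \<le> C / sqrt (1 + a^2 + b^2) ^ Suc i" if "i \<le> 3" for i a b
      using order_trans[OF bnd[of i 0 0 a b z] sqmono[OF C0, of "1 + a^2 + b^2"]] that by simp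
    have bQ: "\<bar>pd3ijk 0 i 0 f a b z\<bar> \<le> C / sqrt (1 + a^2 + b^2) ^ Suc i" if "i \<le> 3" for i a b
      using order_trans[OF bnd[of 0 i 0 a b z] sqmono[OF C0, of "1 + a^2 + b^2"]] that by simp
    note X = lem2both[where P = "\<lambda>i a b. pd3ijk i 0 0 f a b z" and Q = "\<lambda>i a b. pd3ijk 0 i 0 f a b z"
        and C = C, OF _ pdX[OF sm] pdY[OF sm] c_xy[OF cont] c_xy[OF cont] bP bQ k1 k2]
    show ?thesis using X unfolding A_def B_def by simp
  qed
  have Gp: "\<exists>L. ((\<lambda>(r,s). integral {-r..r} (\<lambda>z. integral {-s..s} (\<lambda>x. of_real (f x y z) * ef k1 x * ef k3 z))) \<longlongrightarrow> L)
           (at_top \<times>\<^sub>F at_top) \<and>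
         ((\<lambda>z. A k1 y z * ef k3 z) has_integral L) UNIV \<and>
         ((\<lambda>x. Cc x y k3 * ef k1 x) has_integral L) UNIV" if k1: "k1 \<noteq> 0" and k3: "k3 \<noteq> 0" for k1 y k3
  proof -
    have bP: "\<bar>pd3ijk i 0 0 f a y b\<bar> \<le> C / sqrt (1 + a^2 + b^2) ^ Suc i" if "i \<le> 3" for i a b
      using order_trans[OF bnd[of i 0 0 a y b] sqmono[OF C0, of "1 + a^2 + b^2"]] that by simp
    have bQ: "\<bar>pd3ijk 0 0 i f a y b\<bar> \<le> C / sqrt (1 + a^2 + b^2) ^ Suc i" if "i \<le> 3" for i a b
      using order_trans[OF bnd[of 0 0 i a y b] sqmono[OF C0, of "1 + a^2 + b^2"]] that by simp
    note X = lem2both[where P = "\<lambda>i a b. pd3ijk i 0 0 f a y b" and Q = "\<lambda>i a b. pd3ijk 0 0 i f a y b"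
        and C = C, OF _ pdX[OF sm] pdZ[OF sm] c_xz[OF cont] c_xz[OF cont] bP bQ k1 k3]
    show ?thesis using X unfolding A_def Cc_def by simp
  qed
  have Hp: "\<exists>L. ((\<lambda>(r,s). integral {-r..r} (\<lambda>z. integral {-s..s} (\<lambda>y. of_real (f x y z) * ef k2 y * ef k3 z))) \<longlongrightarrow> L)
           (at_top \<times>\<^sub>F at_top) \<and>
         ((\<lambda>z. B x k2 z * ef k3 z) has_integral L) UNIV \<and>
         ((\<lambda>y. Cc x y k3 * ef k2 y) has_integral L) UNIV" if k2: "k2 \<noteq> 0" and k3: "k3 \<noteq> 0" for x k2 k3
  proof -
    have bP: "\<bar>pd3ijk 0 i 0 f x a b\<bar> \<le> C / sqrt (1 + a^2 + b^2) ^ Suc i" if "i \<le> 3" for i a b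
      using order_trans[OF bnd[of 0 i 0 x a b] sqmono[OF C0, of "1 + a^2 + b^2"]] that by simp
    have bQ: "\<bar>pd3ijk 0 0 i f x a b\<bar> \<le> C / sqrt (1 + a^2 + b^2) ^ Suc i" if "i \<le> 3" for i a b
      using order_trans[OF bnd[of 0 0 i x a b] sqmono[OF C0, of "1 + a^2 + b^2"]] that by simp
    note X = lem2both[where P = "\<lambda>i a b. pd3ijk 0 i 0 f x a b" and Q = "\<lambda>i a b. pd3ijk 0 0 i f x a b"
        and C = C, OF _ pdY[OF sm] pdZ[OF sm] c_yz[OF cont] c_yz[OF cont] bP bQ k2 k3]
    show ?thesis using X unfolding B_def Cc_def by simp
  qed
  have Fl: "((\<lambda>(r,s). integral {-r..r} (\<lambda>y. integral {-s..s} (\<lambda>x. of_real (f x y z) * ef k1 x * ef k2 y))) \<longlongrightarrow> F k1 k2 z)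
           (at_top \<times>\<^sub>F at_top) \<and>
         ((\<lambda>y. A k1 y z * ef k2 y) has_integral F k1 k2 z) UNIV \<and>
         ((\<lambda>x. B x k2 z * ef k1 x) has_integral F k1 k2 z) UNIV" if kk: "k1 \<noteq> 0" "k2 \<noteq> 0" for k1 k2 z
  proof -
    obtain L where L: "((\<lambda>(r,s). integral {-r..r} (\<lambda>y. integral {-s..s} (\<lambda>x. of_real (f x y z) * ef k1 x * ef k2 y))) \<longlongrightarrow> L)
           (at_top \<times>\<^sub>F at_top)" "((\<lambda>y. A k1 y z * ef k2 y) has_integral L) UNIV"
         "((\<lambda>x. B x k2 z * ef k1 x) has_integral L) UNIV" using Fp[OF kk] by blast
    have "F k1 k2 z = L" unfolding F_def by (rule tendsto_Lim[OF ntriv L(1)])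
    then show ?thesis using L by simp
  qed
  have Gl: "((\<lambda>(r,s). integral {-r..r} (\<lambda>z. integral {-s..s} (\<lambda>x. of_real (f x y z) * ef k1 x * ef k3 z))) \<longlongrightarrow> G k1 y k3)
           (at_top \<times>\<^sub>F at_top) \<and>
         ((\<lambda>z. A k1 y z * ef k3 z) has_integral G k1 y k3) UNIV \<and>
         ((\<lambda>x. Cc x y k3 * ef k1 x) has_integral G k1 y k3) UNIV" if kk: "k1 \<noteq> 0" "k3 \<noteq> 0" for k1 y k3
  proof -
    obtain L where L: "((\<lambda>(r,s). integral {-r..r} (\<lambda>z. integral {-s..s} (\<lambda>x. of_real (f x y z) * ef k1 x * ef k3 z))) \<longlongrightarrow> L)
           (at_top \<times>\<^sub>F at_top)" "((\<lambda>z. A k1 y z * ef k3 z) has_integral L) UNIV"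
         "((\<lambda>x. Cc x y k3 * ef k1 x) has_integral L) UNIV" using Gp[OF kk] by blast
    have "G k1 y k3 = L" unfolding G_def by (rule tendsto_Lim[OF ntriv L(1)])
    then show ?thesis using L by simp
  qed
  have Hl: "((\<lambda>(r,s). integral {-r..r} (\<lambda>z. integral {-s..s} (\<lambda>y. of_real (f x y z) * ef k2 y * ef k3 z))) \<longlongrightarrow> H x k2 k3)
           (at_top \<times>\<^sub>F at_top) \<and>
         ((\<lambda>z. B x k2 z * ef k3 z) has_integral H x k2 k3) UNIV \<and>
         ((\<lambda>y. Cc x y k3 * ef k2 y) has_integral H x k2 k3) UNIV" if kk: "k2 \<noteq> 0" "k3 \<noteq> 0" for x k2 k3
  proof -
    obtain L where L: "((\<lambda>(r,s). integral {-r..r} (\<lambda>z. integral {-s..s} (\<lambda>y. of_real (f x y z) * ef k2 y * ef k3 z))) \<longlongrightarrow> L)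
           (at_top \<times>\<^sub>F at_top)" "((\<lambda>z. B x k2 z * ef k3 z) has_integral L) UNIV"
         "((\<lambda>y. Cc x y k3 * ef k2 y) has_integral L) UNIV" using Hp[OF kk] by blast
    have "H x k2 k3 = L" unfolding H_def by (rule tendsto_Lim[OF ntriv L(1)])
    then show ?thesis using L by simp
  qed
  have KA: "0 \<le> norm (cc k)^3 * (C * pi)" for k using C0 by simp
  have mA: "mod_dec2 {} 3 (\<lambda>y z. A k1 y z)" if "k1 \<noteq> 0" for k1
    by (rule md2[OF KA]) (use Ax[OF that] in blast)
  have mB: "mod_dec2 {} 3 (\<lambda>x z. B x k2 z)" if "k2 \<noteq> 0" for k2
    by (rule md2[OF KA]) (use By[OF that] in blast)
  have mC: "mod_dec2 {} 3 (\<lambda>x y. Cc x y k3)" if "k3 \<noteq> 0" for k3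
    by (rule md2[OF KA]) (use Cz[OF that] in blast)
  have KF: "0 \<le> norm (cc k)^3 * (C * pi) * pi" for k using C0 by simp
  have mF: "mod_dec1 (\<lambda>z. F k1 k2 z)" if k: "k1 \<noteq> 0" "k2 \<noteq> 0" for k1 k2
  proof (rule md1[OF KF])
    fix z
    have "norm (A k1 y z * ef k2 y) \<le> norm (cc k1)^3 * (C * pi) / sqrt (1 + y^2 + z^2) ^ 3" for y
      using Ax[OF k(1), of y z] by (simp add: norm_mult add.assoc)
    then show "norm (F k1 k2 z) \<le> norm (cc k1)^3 * (C * pi) * pi / (1 + z^2)"
      by (intro fbound[where w = "z^2", OF conjunct1[OF conjunct2[OF Fl[OF k]]] KA]) auto
  qed
  have mG: "mod_dec1 (\<lambda>y. G k1 y k3)" if k: "k1 \<noteq> 0" "k3 \<noteq> 0" for k1 k3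
  proof (rule md1[OF KF])
    fix y
    have "norm (A k1 y z * ef k3 z) \<le> norm (cc k1)^3 * (C * pi) / sqrt (1 + z^2 + y^2) ^ 3" for z
    proof -
      have e: "1 + (y^2 + z^2) = 1 + z^2 + y^2" by simp
      show ?thesis using Ax[OF k(1), of y z] unfolding e by (simp add: norm_mult)
    qed
    then show "norm (G k1 y k3) \<le> norm (cc k1)^3 * (C * pi) * pi / (1 + y^2)"
      by (intro fbound[where w = "y^2", OF conjunct1[OF conjunct2[OF Gl[OF k]]] KA]) auto
  qed
  have mH: "mod_dec1 (\<lambda>x. H x k2 k3)" if k: "k2 \<noteq> 0" "k3 \<noteq> 0" for k2 k3
  proof (rule md1[OF KF])
    fix x
    have "norm (B x k2 z * ef k3 z) \<le> norm (cc k2)^3 * (C * pi) / sqrt (1 + z^2 + x^2) ^ 3" for z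
    proof -
      have e: "1 + (x^2 + z^2) = 1 + z^2 + x^2" by simp
      show ?thesis using By[OF k(1), of x z] unfolding e by (simp add: norm_mult)
    qed
    then show "norm (H x k2 k3) \<le> norm (cc k2)^3 * (C * pi) * pi / (1 + x^2)"
      by (intro fbound[where w = "x^2", OF conjunct1[OF conjunct2[OF Hl[OF k]]] KA]) auto
  qed
  show ?thesis
    apply (rule exI[of _ A], rule exI[of _ B], rule exI[of _ Cc], rule exI[of _ F], rule exI[of _ G], rule exI[of _ H])
    apply (intro conjI)
    subgoal using Ax by blast
    subgoal using By by blast
    subgoal using Cz by blast
    subgoal using mA by blast
    subgoal using mB by blast
    subgoal using mC by blast
    subgoal using Fl by blast
    subgoal using Gl by blast
    subgoal using Hl by blast
    subgoal using mF by blast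
    subgoal using mG by blast
    subgoal using mH by blast
    subgoal using Fl by blast
    subgoal using Gl by blast
    subgoal using Hl by blast
    done
qed

end
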